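(* Let $\{\mathcal N,\gamma,\boldsymbol\ell,\ell^{(2)}\}$ be null metric hypersurface data. Then $${\stackrel{\circ}{R}}_{ab}n^a=\pounds_ns_b-2P^{af}U_{ab}s_f+P^{cf}{\stackrel{\circ}{\nabla}}_cU_{bf}-{\stackrel{\circ}{\nabla}}_b(\mathrm{tr}_P\mathbf U)+(\mathrm{tr}_P\mathbf U)s_b,$$ $${\stackrel{\circ}{R}}_{(ab)}n^a=\tfrac12\pounds_ns_b-2P^{af}U_{ab}s_f+P^{cf}{\stackrel{\circ}{\nabla}}_cU_{bf}-{\stackrel{\circ}{\nabla}}_b(\mathrm{tr}_P\mathbf U)+(\mathrm{tr}_P\mathbf U)s_b,$$ $${\stackrel{\circ}{R}}_{ab}n^an^b=-P^{ab}P^{cd}U_{ac}U_{bd}-n(\mathrm{tr}_P\mathbf U).$$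
   Context: Metric hypersurface data $\{\mathcal N,\gamma,\boldsymbol\ell,\ell^{(2)}\}$: $\mathcal N$ smooth $\mathfrak n$-manifold, $\gamma$ symmetric $2$-covariant, $\boldsymbol\ell$ a one-form, $\ell^{(2)}$ a function, such that $\boldsymbol{\mathcal A}|_p((W,a),(Z,b))=\gamma(W,Z)+a\boldsymbol\ell(Z)+b\boldsymbol\ell(W)+ab\ell^{(2)}$ is non-degenerate; its inverse $\mathcal A((\boldsymbol\alpha,a),(\boldsymbol\beta,b))=P(\boldsymbol\alpha,\boldsymbol\beta)+a\,n(\boldsymbol\beta)+b\,n(\boldsymbol\alpha)+ab\,n^{(2)}$ defines $P,n,n^{(2)}$ with $\gamma_{ab}n^b+n^{(2)}\ell_a=0$, $\ell_an^a+n^{(2)}\ell^{(2)}=1$, $P^{ab}\ell_b+\ell^{(2)}n^a=0$, $P^{ab}\gamma_{bc}+n^a\ell_c=\delta^a_c$. Null: $n^{(2)}=0$. $\mathbf F=\frac12d\boldsymbol\ell$, $s_b=n^aF_{ab}$, $\mathbf U=\frac12\pounds_n\gamma$, $\mathrm{tr}_P\mathbf U=P^{ab}U_{ab}$. ${\stackrel{\circ}{\nabla}}$ is the unique torsion-free connection with $({\stackrel{\circ}{\nabla}}_X\gamma)(Z,W)=-\mathbf U(X,Z)\boldsymbol\ell(W)-\mathbf U(X,W)\boldsymbol\ell(Z)$, $({\stackrel{\circ}{\nabla}}_X\boldsymbol\ell)(Z)+({\stackrel{\circ}{\nabla}}_Z\boldsymbol\ell)(X)=-2\ell^{(2)}\mathbf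 U(X,Z)$; curvature convention $R(X,W)Z=(\nabla_X\nabla_W-\nabla_W\nabla_X-\nabla_{[X,W]})Z$, $R^a{}_{bcd}\leftrightarrow\alpha_aZ^bX^cW^d$, Ricci ${\stackrel{\circ}{R}}_{bd}={\stackrel{\circ}{R}}{}^a{}_{bad}$. Parentheses: symmetrization with weight $1/2$. *)

theory Defs
  imports "HOL-Analysis.Analysis"
begin

text \<open>The manifold N is represented by a coordinate
chart: an open set S of real^'n, where CARD('n) is the dimension of N.
Tensor fields are given by their components, functions S -> real.
Index conventions: g a b = gamma_ab, l a = ell_a, l2 = ell^(2),
Gam a b c = Christoffel symbol Gamma^a_bc with nabla_b (d_c) = Gamma^a_bc d_a.\<close>

definition pd :: "'n::finite \<Rightarrow> (real^'n \<Rightarrow> real) \<Rightarrow> real^'n \<Rightarrow> real" where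
  "pd i f = (\<lambda>x. frechet_derivative f (at x) (axis i 1))"

definition smooth_on :: "(real^'n::finite) set \<Rightarrow> (real^'n \<Rightarrow> real) \<Rightarrow> bool" where
  "smooth_on S f \<longleftrightarrow> (\<forall>is. (foldr pd is f) differentiable_on S)"

text \<open>The matrix of the bilinear form boldA on T_pN x R (index None = the R slot).\<close>
definition Amat :: "('n::finite \<Rightarrow> 'n \<Rightarrow> real^'n \<Rightarrow> real) \<Rightarrow> ('n \<Rightarrow> real^'n \<Rightarrow> real)
     \<Rightarrow> (real^'n \<Rightarrow> real) \<Rightarrow> real^'n \<Rightarrow> real^('n option)^('n option)" where
  "Amat g l l2 x = (\<chi> i j. (case (i, j) of
       (Some a, Some b) \<Rightarrow> g a b x
     | (Some a, None) \<Rightarrow> l a x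
     | (None, Some b) \<Rightarrow> l b x
     | (None, None) \<Rightarrow> l2 x))"

definition metric_hypersurface_data where
  "metric_hypersurface_data S g l l2 \<longleftrightarrow> open S
     \<and> (\<forall>a b x. g a b x = g b a x)
     \<and> (\<forall>a b. smooth_on S (g a b)) \<and> (\<forall>a. smooth_on S (l a)) \<and> smooth_on S l2
     \<and> (\<forall>x\<in>S. invertible (Amat g l l2 x))"

text \<open>Components of the inverse form calA: P^ab, n^a, n^(2).\<close>
definition Pm where "Pm g l l2 a b x = matrix_inv (Amat g l l2 x) $ Some a $ Some b"
definition nv where "nv g l l2 a x = matrix_inv (Amat g l l2 x) $ Some a $ None"
definition n2 where "n2 g l l2 x = matrix_inv (Amat g l l2 x) $ None $ None"

definition null_data where
  "null_data S g l l2 \<longleftrightarrow> metric_hypersurface_data S g l l2 \<and> (\<forall>x\<in>S. n2 g l l2 x = 0)"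

text \<open>F = 1/2 d ell, s_b = n^a F_ab, U = 1/2 Lie_n gamma, tr_P U.\<close>
definition Fm where "Fm l a b x = (pd a (l b) x - pd b (l a) x) / 2"
definition sv where "sv g l l2 b x = (\<Sum>a\<in>UNIV. nv g l l2 a x * Fm l a b x)"
definition Uf where "Uf g l l2 a b x = (\<Sum>c\<in>UNIV. nv g l l2 c x * pd c (g a b) x
      + g c b x * pd a (nv g l l2 c) x + g a c x * pd b (nv g l l2 c) x) / 2"
definition trPU where "trPU g l l2 x = (\<Sum>a\<in>UNIV. \<Sum>b\<in>UNIV. Pm g l l2 a b x * Uf g l l2 a b x)"

definition lie_n_s where "lie_n_s g l l2 b x = (\<Sum>c\<in>UNIV. nv g l l2 c x * pd c (sv g l l2 b) x
      + sv g l l2 c x * pd b (nv g l l2 c) x)"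

definition ring_connection where
  "ring_connection S g l l2 Gam \<longleftrightarrow>
     (\<forall>a b c. smooth_on S (Gam a b c)) \<and>
     (\<forall>x\<in>S. \<forall>a b c. Gam a b c x = Gam a c b x) \<and>
     (\<forall>x\<in>S. \<forall>c a b. pd c (g a b) x - (\<Sum>d\<in>UNIV. Gam d c a x * g d b x + Gam d c b x * g a d x)
              = - Uf g l l2 c a x * l b x - Uf g l l2 c b x * l a x) \<and>
     (\<forall>x\<in>S. \<forall>c a. (pd c (l a) x - (\<Sum>d\<in>UNIV. Gam d c a x * l d x))
                 + (pd a (l c) x - (\<Sum>d\<in>UNIV. Gam d a c x * l d x))
              = - 2 * l2 x * Uf g l l2 c a x)"

definition nablaU where "nablaU g l l2 Gam c b f x = pd c (Uf g l l2 b f) x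
     - (\<Sum>d\<in>UNIV. Gam d c b x * Uf g l l2 d f x + Gam d c f x * Uf g l l2 b d x)"

text \<open>Riemann tensor R^a_bcd with R^a_bcd Z^b = (nabla_c nabla_d - nabla_d nabla_c) Z^a, Ricci R_bd = R^a_bad.\<close>
definition Riem where "Riem Gam a b c d x = pd c (Gam a d b) x - pd d (Gam a c b) x
     + (\<Sum>e\<in>UNIV. Gam a c e x * Gam e d b x - Gam a d e x * Gam e c b x)"
definition Ric where "Ric Gam b d x = (\<Sum>a\<in>UNIV. Riem Gam a b a d x)"

end

theory Submission
  imports Defs
begin

section \<open>Partial derivatives: basic rules\<close>

lemma pd_has: "(f has_derivative f') (at x) \<Longrightarrow> pd i f x = f' (axis i 1)"
  unfolding pd_def using frechet_derivative_at by metis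

lemma pd_local:
  assumes "open S" "x \<in> S" "\<forall>y\<in>S. f y = g y"
  shows "pd i f x = pd i g x"
proof -
  have "\<And>f'. (f has_derivative f') (at x) \<longleftrightarrow> (g has_derivative f') (at x)"
    using has_derivative_transform_within_open[OF _ assms(1,2)] assms(3) by metis
  then show ?thesis unfolding pd_def frechet_derivative_def by simp
qed

lemma pd_local_fun:
  assumes "open S" "\<forall>y\<in>S. f y = g y"
  shows "\<And>y. y \<in> S \<Longrightarrow> pd i f y = pd i g y"
  using pd_local assms by metis

lemma diff_at_has: "f differentiable at x \<Longrightarrow> (f has_derivative frechet_derivative f (at x)) (at x)"
  using frechet_derivative_works by blast

lemma pd_add:
  assumes "f differentiable at x" "g differentiable at x"
  shows "pd i (\<lambda>y. f y + g y) x = pd i f x + pd i g x"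
  using pd_has[OF has_derivative_add[OF diff_at_has[OF assms(1)] diff_at_has[OF assms(2)]]]
  by (simp add: pd_def)

lemma pd_diff:
  assumes "f differentiable at x" "g differentiable at x"
  shows "pd i (\<lambda>y. f y - g y) x = pd i f x - pd i g x"
  using pd_has[OF has_derivative_diff[OF diff_at_has[OF assms(1)] diff_at_has[OF assms(2)]]]
  by (simp add: pd_def)

lemma pd_minus:
  assumes "f differentiable at x"
  shows "pd i (\<lambda>y. - f y) x = - pd i f x"
  using pd_has[OF has_derivative_minus[OF diff_at_has[OF assms(1)]]]
  by (simp add: pd_def)

lemma pd_mult:
  assumes "f differentiable at x" "g differentiable at x"
  shows "pd i (\<lambda>y. f y * g y) x = pd i f x * g x + f x * pd i g x"
  using pd_has[OF has_derivative_mult[OF diff_at_has[OF assms(1)] diff_at_has[OF assms(2)]]]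
  by (simp add: pd_def)

lemma pd_const: "pd i (\<lambda>y. c) x = 0"
  by (simp add: pd_def)

lemma pd_cmult:
  assumes "f differentiable at x"
  shows "pd i (\<lambda>y. c * f y) x = c * pd i f x"
  using pd_mult[OF differentiable_const assms] by (simp add: pd_const)

lemma pd_sum:
  assumes "finite A" "\<And>a. a \<in> A \<Longrightarrow> f a differentiable at x"
  shows "pd i (\<lambda>y. \<Sum>a\<in>A. f a y) x = (\<Sum>a\<in>A. pd i (f a) x)"
proof -
  have "((\<lambda>y. \<Sum>a\<in>A. f a y) has_derivative (\<lambda>h. \<Sum>a\<in>A. frechet_derivative (f a) (at x) h)) (at x)"
    using assms by (intro has_derivative_sum diff_at_has) auto
  from pd_has[OF this] show ?thesis by (simp add: pd_def)
qed

lemma pd_inverse: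
  assumes "f differentiable at x" "f x \<noteq> 0"
  shows "pd i (\<lambda>y. inverse (f y)) x = - (pd i f x * inverse (f x) * inverse (f x))"
  using pd_has[OF Deriv.has_derivative_inverse[of f x, OF assms(2) diff_at_has[OF assms(1)]]]
  by (simp add: pd_def)

section \<open>Smoothness\<close>

lemma diff_on_inverse:
  fixes f :: "real^'n::finite \<Rightarrow> real"
  assumes "open S" "f differentiable_on S" "\<And>y. y \<in> S \<Longrightarrow> f y \<noteq> 0"
  shows "(\<lambda>y. inverse (f y)) differentiable_on S"
  unfolding differentiable_on_eq_differentiable_at[OF assms(1)]
proof
  fix x assume x: "x \<in> S"
  then have "f differentiable at x" using assms(1,2) differentiable_on_eq_differentiable_at by blast
  then show "(\<lambda>y. inverse (f y)) differentiable at x"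
    using Deriv.has_derivative_inverse[of f x, OF assms(3)[OF x] diff_at_has] unfolding differentiable_def by blast
qed

definition Ck :: "(real^'n::finite) set \<Rightarrow> nat \<Rightarrow> (real^'n \<Rightarrow> real) \<Rightarrow> bool" where
  "Ck S k f \<longleftrightarrow> (\<forall>is. length is \<le> k \<longrightarrow> (foldr pd is f) differentiable_on S)"

lemma smooth_Ck: "smooth_on S f \<longleftrightarrow> (\<forall>k. Ck S k f)"
  unfolding smooth_on_def Ck_def by auto

lemma Ck_0: "Ck S 0 f \<longleftrightarrow> f differentiable_on S"
  unfolding Ck_def by auto

lemma Ck_Suc: "Ck S (Suc k) f \<longleftrightarrow> f differentiable_on S \<and> (\<forall>i. Ck S k (pd i f))"
proof
  assume H: "Ck S (Suc k) f"
  have "Ck S k (pd i f)" for i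
    unfolding Ck_def
  proof (intro allI impI)
    fix "is" :: "'a list" assume "length is \<le> k"
    then have "length (is @ [i]) \<le> Suc k" by simp
    then have "foldr pd (is @ [i]) f differentiable_on S"
      using H unfolding Ck_def by blast
    then show "foldr pd is (pd i f) differentiable_on S" by simp
  qed
  moreover have "f differentiable_on S" using H unfolding Ck_def
    by (metis foldr_Nil id_apply le0 list.size(3))
  ultimately show "f differentiable_on S \<and> (\<forall>i. Ck S k (pd i f))" by blast
next
  assume H: "f differentiable_on S \<and> (\<forall>i. Ck S k (pd i f))"
  show "Ck S (Suc k) f"
    unfolding Ck_def
  proof (intro allI impI)
    fix "is" :: "'a list" assume L: "length is \<le> Suc k"
    show "foldr pd is f differentiable_on S"
    proof (cases "is" rule: rev_cases)
      case Nil then show ?thesis using H by simp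
    next
      case (snoc js i)
      then have "length js \<le> k" using L by simp
      then have "foldr pd js (pd i f) differentiable_on S" using H unfolding Ck_def by blast
      then show ?thesis using snoc by simp
    qed
  qed
qed

lemma Ck_mono: "Ck S (Suc k) f \<Longrightarrow> Ck S k f"
  unfolding Ck_def by auto

lemma Ck_diff_at: "Ck S k f \<Longrightarrow> open S \<Longrightarrow> x \<in> S \<Longrightarrow> f differentiable at x"
  unfolding Ck_def
  by (metis differentiable_on_eq_differentiable_at foldr_Nil id_apply le0 list.size(3))

lemma differentiable_on_local:
  assumes "open S" "\<forall>y\<in>S. f y = g y" "f differentiable_on S"
  shows "g differentiable_on S"
  unfolding differentiable_on_eq_differentiable_at[OF assms(1)]
proof
  fix x assume x: "x \<in> S"
  then obtain f' where "(f has_derivative f') (at x)"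
    using assms(3) differentiable_on_eq_differentiable_at[OF assms(1)] differentiable_def by blast
  then have "(g has_derivative f') (at x)"
    using has_derivative_transform_within_open[OF _ assms(1) x] assms(2) by blast
  then show "g differentiable at x" unfolding differentiable_def by blast
qed

lemma Ck_local:
  assumes "open S" "\<forall>y\<in>S. f y = g y" "Ck S k f"
  shows "Ck S k g"
  using assms(2,3)
proof (induction k arbitrary: f g)
  case 0
  then show ?case using differentiable_on_local[OF assms(1)] unfolding Ck_0 by blast
next
  case (Suc k)
  have d: "g differentiable_on S"
    using Suc.prems differentiable_on_local[OF assms(1)] unfolding Ck_Suc by blast
  have "Ck S k (pd i g)" for i
  proof -
    have e: "\<forall>y\<in>S. pd i f y = pd i g y" using pd_local[OF assms(1) _ Suc.prems(1)] by blast
    have "Ck S k (pd i f)" using Suc.prems(2) unfolding Ck_Suc by blast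
    then show ?thesis using Suc.IH[OF e] by blast
  qed
  then show ?case using d unfolding Ck_Suc by blast
qed

lemma smooth_local:
  assumes "open S" "\<forall>y\<in>S. f y = g y" "smooth_on S f"
  shows "smooth_on S g"
  unfolding smooth_Ck
proof
  fix k have "Ck S k f" using assms(3) unfolding smooth_Ck by blast
  then show "Ck S k g" using Ck_local[OF assms(1,2)] by blast
qed

lemma smooth_diff_at: "smooth_on S f \<Longrightarrow> open S \<Longrightarrow> x \<in> S \<Longrightarrow> f differentiable at x"
  unfolding smooth_Ck using Ck_diff_at by blast

lemma smooth_pd: "smooth_on S f \<Longrightarrow> smooth_on S (pd i f)"
  unfolding smooth_on_def
proof
  fix "is" assume "\<forall>is. foldr pd is f differentiable_on S"
  then have "foldr pd (is @ [i]) f differentiable_on S" by blast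
  then show "foldr pd is (pd i f) differentiable_on S" by simp
qed

lemma Ck_const: "Ck S k (\<lambda>y. c)"
proof (induction k arbitrary: c)
  case 0 then show ?case by (simp add: Ck_0)
next
  case (Suc k)
  have e: "pd i (\<lambda>y. c) = (\<lambda>y. 0)" for i by (simp add: pd_const fun_eq_iff)
  show ?case unfolding Ck_Suc e using Suc.IH[of 0] by simp
qed

lemma Ck_add:
  assumes "open S" "Ck S k f" "Ck S k g" shows "Ck S k (\<lambda>y. f y + g y)"
  using assms(2,3)
proof (induction k arbitrary: f g)
  case 0 then show ?case unfolding Ck_0 by (rule differentiable_on_add)
next
  case (Suc k)
  have d: "(\<lambda>y. f y + g y) differentiable_on S"
    using Suc.prems unfolding Ck_Suc by (intro differentiable_on_add) blast+
  have "Ck S k (pd i (\<lambda>y. f y + g y))" for i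
  proof -
    have "Ck S k (pd i f)" "Ck S k (pd i g)" using Suc.prems unfolding Ck_Suc by blast+
    then have c: "Ck S k (\<lambda>y. pd i f y + pd i g y)" by (rule Suc.IH)
    have e: "\<forall>y\<in>S. pd i f y + pd i g y = pd i (\<lambda>y. f y + g y) y"
    proof
      fix y assume y: "y \<in> S"
      show "pd i f y + pd i g y = pd i (\<lambda>y. f y + g y) y"
        by (rule pd_add[symmetric]) (rule Ck_diff_at[OF Suc.prems(1) assms(1) y], rule Ck_diff_at[OF Suc.prems(2) assms(1) y])
    qed
    show ?thesis by (rule Ck_local[OF assms(1) e c])
  qed
  then show ?case using d unfolding Ck_Suc by blast
qed

lemma Ck_mult:
  assumes "open S" "Ck S k f" "Ck S k g" shows "Ck S k (\<lambda>y. f y * g y)"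
  using assms(2,3)
proof (induction k arbitrary: f g)
  case 0 then show ?case unfolding Ck_0 by (rule differentiable_on_mult)
next
  case (Suc k)
  have d: "(\<lambda>y. f y * g y) differentiable_on S"
    using Suc.prems unfolding Ck_Suc by (intro differentiable_on_mult) blast+
  have "Ck S k (pd i (\<lambda>y. f y * g y))" for i
  proof -
    have a: "Ck S k (pd i f)" "Ck S k (pd i g)" using Suc.prems unfolding Ck_Suc by blast+
    have b: "Ck S k f" "Ck S k g" using Suc.prems Ck_mono by blast+
    have c1: "Ck S k (\<lambda>y. pd i f y * g y)" by (rule Suc.IH[OF a(1) b(2)])
    have c2: "Ck S k (\<lambda>y. f y * pd i g y)" by (rule Suc.IH[OF b(1) a(2)])
    have c: "Ck S k (\<lambda>y. pd i f y * g y + f y * pd i g y)" by (rule Ck_add[OF assms(1) c1 c2])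
    have e: "\<forall>y\<in>S. pd i f y * g y + f y * pd i g y = pd i (\<lambda>y. f y * g y) y"
    proof
      fix y assume y: "y \<in> S"
      show "pd i f y * g y + f y * pd i g y = pd i (\<lambda>y. f y * g y) y"
        by (rule pd_mult[symmetric]) (rule Ck_diff_at[OF Suc.prems(1) assms(1) y], rule Ck_diff_at[OF Suc.prems(2) assms(1) y])
    qed
    show ?thesis by (rule Ck_local[OF assms(1) e c])
  qed
  then show ?case using d unfolding Ck_Suc by blast
qed

lemma Ck_minus:
  assumes "open S" "Ck S k f" shows "Ck S k (\<lambda>y. - f y)"
  using Ck_mult[OF assms(1) Ck_const[of S k "-1"] assms(2)] by simp

lemma Ck_inverse:
  assumes "open S" "Ck S k f" "\<And>y. y \<in> S \<Longrightarrow> f y \<noteq> 0" shows "Ck S k (\<lambda>y. inverse (f y))"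
  using assms(2)
proof (induction k)
  case 0 then show ?case using diff_on_inverse[of S f, OF assms(1) _ assms(3)] unfolding Ck_0 by blast
next
  case (Suc k)
  have fd: "(\<lambda>y. inverse (f y)) differentiable_on S"
    using Suc.prems diff_on_inverse[of S f, OF assms(1) _ assms(3)] unfolding Ck_Suc by blast
  have "Ck S k (pd i (\<lambda>y. inverse (f y)))" for i
  proof -
    have I: "Ck S k (\<lambda>y. inverse (f y))" using Suc.IH Suc.prems Ck_mono by blast
    have a: "Ck S k (pd i f)" using Suc.prems unfolding Ck_Suc by blast
    have c: "Ck S k (\<lambda>y. - (pd i f y * inverse (f y) * inverse (f y)))"
      by (rule Ck_minus[OF assms(1) Ck_mult[OF assms(1) Ck_mult[OF assms(1) a I] I]])
    have e: "\<forall>y\<in>S. - (pd i f y * inverse (f y) * inverse (f y)) = pd i (\<lambda>y. inverse (f y)) y"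
    proof
      fix y assume y: "y \<in> S"
      show "- (pd i f y * inverse (f y) * inverse (f y)) = pd i (\<lambda>y. inverse (f y)) y"
        by (rule pd_inverse[symmetric]) (rule Ck_diff_at[OF Suc.prems(1) assms(1) y], rule assms(3)[OF y])
    qed
    show ?thesis by (rule Ck_local[OF assms(1) e c])
  qed
  then show ?case using fd unfolding Ck_Suc by blast
qed

lemma smooth_const: "smooth_on S (\<lambda>y. c)"
  using Ck_const smooth_Ck by blast
lemma smooth_add: "open S \<Longrightarrow> smooth_on S f \<Longrightarrow> smooth_on S g \<Longrightarrow> smooth_on S (\<lambda>y. f y + g y)"
  unfolding smooth_Ck using Ck_add by blast
lemma smooth_mult: "open S \<Longrightarrow> smooth_on S f \<Longrightarrow> smooth_on S g \<Longrightarrow> smooth_on S (\<lambda>y. f y * g y)"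
  unfolding smooth_Ck using Ck_mult by blast
lemma smooth_minus: "open S \<Longrightarrow> smooth_on S f \<Longrightarrow> smooth_on S (\<lambda>y. - f y)"
  unfolding smooth_Ck using Ck_minus by blast
lemma smooth_diff: "open S \<Longrightarrow> smooth_on S f \<Longrightarrow> smooth_on S g \<Longrightarrow> smooth_on S (\<lambda>y. f y - g y)"
  using smooth_add[of S f "\<lambda>y. - g y"] smooth_minus[of S g] by (simp add: diff_conv_add_uminus[symmetric])
lemma smooth_inverse: "open S \<Longrightarrow> smooth_on S f \<Longrightarrow> (\<And>y. y \<in> S \<Longrightarrow> f y \<noteq> 0) \<Longrightarrow> smooth_on S (\<lambda>y. inverse (f y))"
  unfolding smooth_Ck using Ck_inverse by blast
lemma smooth_divide: "open S \<Longrightarrow> smooth_on S f \<Longrightarrow> smooth_on S g \<Longrightarrow> (\<And>y. y \<in> S \<Longrightarrow> g y \<noteq> 0) \<Longrightarrow> smooth_on S (\<lambda>y. f y / g y)"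
  using smooth_mult[of S f "\<lambda>y. inverse (g y)"] smooth_inverse[of S g] by (simp add: divide_inverse[symmetric])

lemma smooth_sum:
  assumes "open S" "finite A" "\<And>a. a \<in> A \<Longrightarrow> smooth_on S (f a)"
  shows "smooth_on S (\<lambda>y. \<Sum>a\<in>A. f a y)"
  using assms(2,3)
proof (induction A rule: finite_induct)
  case empty then show ?case by (simp add: smooth_const)
next
  case (insert a A)
  have h: "smooth_on S (f a)" "smooth_on S (\<lambda>y. \<Sum>a\<in>A. f a y)" using insert.IH insert.prems by simp_all
  have "smooth_on S (\<lambda>y. f a y + (\<Sum>a\<in>A. f a y))"
    by (rule smooth_add[OF assms(1) h(1) h(2)])
  then show ?case using insert.hyps by (simp add: sum.insert)
qed

lemma smooth_prod:
  assumes "open S" "finite A" "\<And>a. a \<in> A \<Longrightarrow> smooth_on S (f a)"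
  shows "smooth_on S (\<lambda>y. \<Prod>a\<in>A. f a y)"
  using assms(2,3)
proof (induction A rule: finite_induct)
  case empty then show ?case by (simp add: smooth_const)
next
  case (insert a A)
  have h: "smooth_on S (f a)" "smooth_on S (\<lambda>y. \<Prod>a\<in>A. f a y)" using insert.IH insert.prems by simp_all
  have "smooth_on S (\<lambda>y. f a y * (\<Prod>a\<in>A. f a y))"
    by (rule smooth_mult[OF assms(1) h(1) h(2)])
  then show ?case using insert.hyps by (simp add: prod.insert)
qed

lemma line_deriv:
  fixes f :: "real^'n::finite \<Rightarrow> real"
  assumes "f differentiable at (x + t *\<^sub>R u + w)"
  shows "((\<lambda>t. f (x + t *\<^sub>R u + w)) has_real_derivative frechet_derivative f (at (x + t *\<^sub>R u + w)) u) (at t)"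
proof -
  let ?y = "x + t *\<^sub>R u + w"
  let ?D = "frechet_derivative f (at ?y)"
  have fD: "(f has_derivative ?D) (at ?y)" using assms frechet_derivative_works by blast
  have lD: "linear ?D" using fD has_derivative_linear by blast
  have pD: "((\<lambda>t. x + t *\<^sub>R u + w) has_derivative (\<lambda>s. s *\<^sub>R u)) (at t)"
    by (auto intro!: derivative_eq_intros)
  have "((\<lambda>t. f (x + t *\<^sub>R u + w)) has_derivative (\<lambda>s. ?D (s *\<^sub>R u))) (at t)"
    using diff_chain_at[OF pD fD] by (simp add: o_def)
  then show ?thesis
    by (rule has_derivative_imp_has_field_derivative) (simp add: linear_cmul[OF lD])
qed

lemma schwarz_half:
  fixes f :: "real^'n::finite \<Rightarrow> real"
  assumes S: "open S" "x \<in> S" and fd: "\<And>y. y \<in> S \<Longrightarrow> f differentiable at y"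
    and gd: "pd i f differentiable at x" and e: "e > 0"
  shows "\<exists>d>0. \<forall>h. 0 < h \<and> h < d \<longrightarrow>
     \<bar>(f (x + h *\<^sub>R axis i 1 + h *\<^sub>R axis j 1) - f (x + h *\<^sub>R axis i 1) - f (x + h *\<^sub>R axis j 1) + f x)
        - h^2 * pd j (pd i f) x\<bar> \<le> 3*e*h^2"
proof -
  define u :: "real^'n" where "u = axis i 1"
  define v :: "real^'n" where "v = axis j 1"
  define g where "g = pd i f"
  have nu: "norm u = 1" "norm v = 1" unfolding u_def v_def by simp_all
  obtain r where r: "r > 0" "ball x r \<subseteq> S" using S open_contains_ball by blast
  define Dg where "Dg = frechet_derivative g (at x)"
  have gD: "(g has_derivative Dg) (at x)" using gd frechet_derivative_works unfolding Dg_def g_def by blast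
  have lDg: "linear Dg" using gD has_derivative_linear by blast
  obtain d1 where d1: "d1 > 0" "\<And>y. norm (y - x) < d1 \<Longrightarrow> \<bar>g y - g x - Dg (y - x)\<bar> \<le> e * norm (y - x)"
    using gD e unfolding has_derivative_at_alt by (metis real_norm_def)
  define d where "d = min r d1 / 2"
  have d: "d > 0" unfolding d_def using r d1 by simp
  have main: "\<bar>(f (x + h *\<^sub>R u + h *\<^sub>R v) - f (x + h *\<^sub>R u) - f (x + h *\<^sub>R v) + f x) - h^2 * Dg v\<bar> \<le> 3*e*h^2"
    if h: "0 < h" "h < d" for h
  proof -
    define \<phi> where "\<phi> t = f (x + t *\<^sub>R u + h *\<^sub>R v) - f (x + t *\<^sub>R u + 0)" for t
    have inS: "x + t *\<^sub>R u + w \<in> S" if "0 \<le> t" "t \<le> h" "norm w \<le> h" for t w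
    proof -
      have "norm (t *\<^sub>R u + w) \<le> norm (t *\<^sub>R u) + norm w" by (rule norm_triangle_ineq)
      also have "norm (t *\<^sub>R u) = t" using nu that by simp
      finally have "norm (t *\<^sub>R u + w) \<le> t + h" using that by linarith
      also have "\<dots> < r" using that h unfolding d_def by linarith
      moreover have "dist x (x + (t *\<^sub>R u + w)) = norm (t *\<^sub>R u + w)"
        by (metis dist_commute dist_norm add_diff_cancel_left')
      ultimately have "x + (t *\<^sub>R u + w) \<in> ball x r" by simp
      then show ?thesis using r by (auto simp: add.assoc)
    qed
    have der: "DERIV \<phi> t :> (g (x + t *\<^sub>R u + h *\<^sub>R v) - g (x + t *\<^sub>R u + 0))" if "0 \<le> t" "t \<le> h" for t
    proof -
      have a: "f differentiable at (x + t *\<^sub>R u + h *\<^sub>R v)" using fd inS that nu h by simp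
      have b: "f differentiable at (x + t *\<^sub>R u + 0)" using fd inS[of t 0] that h by simp
      show ?thesis unfolding \<phi>_def g_def pd_def u_def
        using DERIV_diff[OF line_deriv[OF a] line_deriv[OF b]] by (simp add: u_def)
    qed
    obtain z where z: "0 < z" "z < h" "\<phi> h - \<phi> 0 = (h - 0) * (g (x + z *\<^sub>R u + h *\<^sub>R v) - g (x + z *\<^sub>R u + 0))"
      using MVT2[OF h(1) der] by blast
    have e1: "\<bar>g (x + z *\<^sub>R u + h *\<^sub>R v) - g x - Dg (z *\<^sub>R u + h *\<^sub>R v)\<bar> \<le> 2 * e * h"
    proof -
      have "norm (z *\<^sub>R u + h *\<^sub>R v) \<le> norm (z *\<^sub>R u) + norm (h *\<^sub>R v)" by (rule norm_triangle_ineq)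
      also have "norm (z *\<^sub>R u) = z" using nu z by simp
      also have "norm (h *\<^sub>R v) = h" using nu h by simp
      finally have n: "norm (z *\<^sub>R u + h *\<^sub>R v) \<le> z + h" .
      have "\<bar>g (x + (z *\<^sub>R u + h *\<^sub>R v)) - g x - Dg (z *\<^sub>R u + h *\<^sub>R v)\<bar> \<le> e * norm (z *\<^sub>R u + h *\<^sub>R v)"
        using d1(2)[of "x + (z *\<^sub>R u + h *\<^sub>R v)"] n z h unfolding d_def by simp
      also have "\<dots> \<le> e * (z + h)" using n e by simp
      also have "\<dots> \<le> 2 * e * h" using z e by simp
      finally show ?thesis by (simp add: add.assoc)
    qed
    have e2: "\<bar>g (x + z *\<^sub>R u) - g x - Dg (z *\<^sub>R u)\<bar> \<le> e * h"
    proof -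
      have "\<bar>g (x + z *\<^sub>R u) - g x - Dg (z *\<^sub>R u)\<bar> \<le> e * norm (z *\<^sub>R u)"
        using d1(2)[of "x + z *\<^sub>R u"] nu z h unfolding d_def by simp
      also have "\<dots> \<le> e * h" using nu z e by simp
      finally show ?thesis .
    qed
    have lin: "Dg (z *\<^sub>R u + h *\<^sub>R v) = Dg (z *\<^sub>R u) + h * Dg v"
      using lDg by (simp add: linear_add linear_cmul)
    have "\<bar>g (x + z *\<^sub>R u + h *\<^sub>R v) - g (x + z *\<^sub>R u) - h * Dg v\<bar> \<le> 3 * e * h"
      using e1 e2 lin by linarith
    then have "\<bar>h * (g (x + z *\<^sub>R u + h *\<^sub>R v) - g (x + z *\<^sub>R u) - h * Dg v)\<bar> \<le> h * (3 * e * h)"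
      using h by (simp add: abs_mult)
    moreover have "\<phi> h - \<phi> 0 = f (x + h *\<^sub>R u + h *\<^sub>R v) - f (x + h *\<^sub>R u) - f (x + h *\<^sub>R v) + f x"
      unfolding \<phi>_def by (simp add: add.commute)
    ultimately show ?thesis using z(3) by (simp add: algebra_simps power2_eq_square)
  qed
  have "Dg v = pd j (pd i f) x" unfolding Dg_def g_def v_def pd_def by simp
  then show ?thesis using main d unfolding u_def v_def by auto
qed

lemma schwarz:
  fixes f :: "real^'n::finite \<Rightarrow> real"
  assumes S: "open S" "x \<in> S" and fd: "\<And>y. y \<in> S \<Longrightarrow> f differentiable at y"
    and gi: "pd i f differentiable at x" and gj: "pd j f differentiable at x"
  shows "pd j (pd i f) x = pd i (pd j f) x"
proof (rule ccontr)
  let ?A = "pd j (pd i f) x" and ?B = "pd i (pd j f) x"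
  assume ne: "?A \<noteq> ?B"
  define e where "e = \<bar>?A - ?B\<bar> / 7"
  have e: "e > 0" using ne unfolding e_def by simp
  obtain d1 where d1: "d1 > 0" "\<forall>h. 0 < h \<and> h < d1 \<longrightarrow>
     \<bar>(f (x + h *\<^sub>R axis i 1 + h *\<^sub>R axis j 1) - f (x + h *\<^sub>R axis i 1) - f (x + h *\<^sub>R axis j 1) + f x)
        - h^2 * ?A\<bar> \<le> 3*e*h^2"
    using schwarz_half[OF S fd gi e] by blast
  obtain d2 where d2: "d2 > 0" "\<forall>h. 0 < h \<and> h < d2 \<longrightarrow>
     \<bar>(f (x + h *\<^sub>R axis j 1 + h *\<^sub>R axis i 1) - f (x + h *\<^sub>R axis j 1) - f (x + h *\<^sub>R axis i 1) + f x)
        - h^2 * ?B\<bar> \<le> 3*e*h^2"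
    using schwarz_half[OF S fd gj e] by blast
  define h where "h = min d1 d2 / 2"
  have h: "0 < h" "h < d1" "h < d2" unfolding h_def using d1 d2 by auto
  have c: "x + h *\<^sub>R axis j 1 + h *\<^sub>R axis i 1 = x + h *\<^sub>R axis i 1 + h *\<^sub>R axis j 1"
    by (simp add: algebra_simps)
  have "\<bar>h^2 * ?A - h^2 * ?B\<bar> \<le> 6*e*h^2"
    using d1(2)[rule_format, of h] d2(2)[rule_format, of h] h unfolding c by linarith
  then have "h^2 * \<bar>?A - ?B\<bar> \<le> h^2 * (6*e)"
    by (simp add: abs_mult right_diff_distrib[symmetric] mult.commute mult.left_commute)
  then have "\<bar>?A - ?B\<bar> \<le> 6*e" using h by simp
  moreover have "7 * e = \<bar>?A - ?B\<bar>" unfolding e_def by simp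
  ultimately show False using e by linarith
qed

section \<open>Matrix facts\<close>

lemma sum_option: "(\<Sum>i\<in>(UNIV::'a::finite option set). f i) = f None + (\<Sum>a\<in>UNIV. f (Some a))"
proof -
  have "(\<Sum>i\<in>(UNIV::'a option set). f i) = (\<Sum>i\<in>insert None (range Some). f i)"
    by (simp add: UNIV_option_conv[symmetric])
  also have "\<dots> = f None + (\<Sum>i\<in>range Some. f i)" by (subst sum.insert) auto
  also have "(\<Sum>i\<in>range Some. f i) = (\<Sum>a\<in>UNIV. f (Some a))" by (subst sum.reindex) (auto simp: inj_on_def)
  finally show ?thesis .
qed

lemma matrix_inv_both:
  fixes A :: "'a::field^'n^'n"
  assumes "invertible A"
  shows "A ** matrix_inv A = mat 1" "matrix_inv A ** A = mat 1"
proof -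
  have "\<exists>A'. A ** A' = mat 1 \<and> A' ** A = mat 1" using assms unfolding invertible_def by blast
  then have "A ** matrix_inv A = mat 1 \<and> matrix_inv A ** A = mat 1"
    unfolding matrix_inv_def by (rule someI_ex)
  then show "A ** matrix_inv A = mat 1" "matrix_inv A ** A = mat 1" by auto
qed

lemma matrix_inv_sym:
  fixes A :: "'a::field^'n^'n"
  assumes "invertible A" "transpose A = A"
  shows "transpose (matrix_inv A) = matrix_inv A"
proof -
  let ?B = "matrix_inv A"
  have "transpose ?B ** A = transpose (A ** ?B)"
    using assms(2) by (metis matrix_transpose_mul)
  also have "\<dots> = mat 1" using matrix_inv_both[OF assms(1)] by simp
  finally have 1: "transpose ?B ** A = mat 1" .
  have "transpose ?B = transpose ?B ** (A ** ?B)" using matrix_inv_both[OF assms(1)] by simp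
  also have "\<dots> = (transpose ?B ** A) ** ?B" by (simp add: matrix_mul_assoc)
  also have "\<dots> = ?B" using 1 by simp
  finally show ?thesis .
qed

lemma matrix_inv_cramer:
  fixes A :: "real^'n^'n"
  assumes "invertible A"
  shows "matrix_inv A $ i $ j = det (\<chi> r c. if c = i then (if r = j then 1 else 0) else A $ r $ c) / det A"
proof -
  let ?b = "axis j (1::real)"
  let ?x = "matrix_inv A *v ?b"
  have d: "det A \<noteq> 0" using assms invertible_det_nz by blast
  have "A *v ?x = ?b"
    using matrix_inv_both[OF assms] by (simp add: matrix_vector_mul_assoc)
  then have "?x = (\<chi> k. det(\<chi> r c. if c = k then ?b $ r else A $ r $ c) / det A)"
    using cramer[OF d] by blast
  then have "?x $ i = det(\<chi> r c. if c = i then ?b $ r else A $ r $ c) / det A" by simp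
  moreover have "?x $ i = matrix_inv A $ i $ j"
    by (simp add: matrix_vector_mult_def axis_def if_distrib sum.If_cases cong: if_cong)
  moreover have "(\<chi> r c. if c = i then ?b $ r else A $ r $ c) = (\<chi> r c. if c = i then (if r = j then 1 else 0) else A $ r $ c)"
    by (simp add: axis_def vec_eq_iff)
  ultimately show ?thesis by simp
qed

lemma smooth_det:
  fixes M :: "real^'n::finite \<Rightarrow> real^'m::finite^'m"
  assumes "open S" "\<And>i j. smooth_on S (\<lambda>y. M y $ i $ j)"
  shows "smooth_on S (\<lambda>y. det (M y))"
  unfolding det_def
  by (intro smooth_sum[OF assms(1)] smooth_mult[OF assms(1)] smooth_prod[OF assms(1)] smooth_const assms(2) finite_permutations) simp_all

lemma smooth_if_const: "smooth_on S f \<Longrightarrow> smooth_on S (\<lambda>y. if b then c else f y)"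
  by (cases b) (simp_all add: smooth_const)

lemma smooth_matrix_inv:
  fixes M :: "real^'n::finite \<Rightarrow> real^'m::finite^'m"
  assumes "open S" "\<And>i j. smooth_on S (\<lambda>y. M y $ i $ j)" "\<And>y. y \<in> S \<Longrightarrow> invertible (M y)"
  shows "smooth_on S (\<lambda>y. matrix_inv (M y) $ i $ j)"
proof -
  let ?N = "\<lambda>y. det (\<chi> r c. if c = i then (if r = j then 1 else 0) else M y $ r $ c) / det (M y)"
  have "smooth_on S (\<lambda>y. det (\<chi> r c. if c = i then (if r = j then 1 else 0) else M y $ r $ c))"
    by (rule smooth_det[OF assms(1)]) (auto intro!: smooth_if_const assms(2))
  then have "smooth_on S ?N"
    using smooth_divide[OF assms(1) _ smooth_det[OF assms(1,2)]] assms(3) invertible_det_nz by blast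
  then show ?thesis
    by (rule smooth_local[OF assms(1), rotated]) (simp add: matrix_inv_cramer assms(3))
qed

locale ND =
  fixes S :: "(real^'n::finite) set"
    and g :: "'n \<Rightarrow> 'n \<Rightarrow> real^'n \<Rightarrow> real"
    and l :: "'n \<Rightarrow> real^'n \<Rightarrow> real"
    and l2 :: "real^'n \<Rightarrow> real"
    and Gam :: "'n \<Rightarrow> 'n \<Rightarrow> 'n \<Rightarrow> real^'n \<Rightarrow> real"
  assumes nd: "null_data S g l l2" and rc: "ring_connection S g l l2 Gam"
begin

abbreviation "AA y \<equiv> Amat g l l2 y"
abbreviation "Ai y \<equiv> matrix_inv (Amat g l l2 y)"
abbreviation "vn \<equiv> nv g l l2"
abbreviation "PP \<equiv> Pm g l l2"
abbreviation "UU \<equiv> Uf g l l2"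
abbreviation "ss \<equiv> sv g l l2"
abbreviation "trU \<equiv> trPU g l l2"

lemma S_open: "open S" using nd unfolding null_data_def metric_hypersurface_data_def by blast
lemma gsym: "g a b y = g b a y" using nd unfolding null_data_def metric_hypersurface_data_def by blast
lemma sm_g[simp]: "smooth_on S (g a b)" using nd unfolding null_data_def metric_hypersurface_data_def by blast
lemma sm_l[simp]: "smooth_on S (l a)" using nd unfolding null_data_def metric_hypersurface_data_def by blast
lemma sm_l2[simp]: "smooth_on S l2" using nd unfolding null_data_def metric_hypersurface_data_def by blast
lemma AA_inv: "y \<in> S \<Longrightarrow> invertible (AA y)" using nd unfolding null_data_def metric_hypersurface_data_def by blast
lemma n2z: "y \<in> S \<Longrightarrow> Ai y $ None $ None = 0" using nd unfolding null_data_def n2_def by blast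
lemma sm_Gam[simp]: "smooth_on S (Gam a b c)" using rc unfolding ring_connection_def by blast
lemma Gsym: "y \<in> S \<Longrightarrow> Gam a b c y = Gam a c b y" using rc unfolding ring_connection_def by blast
lemma C1: "y \<in> S \<Longrightarrow> pd c (g a b) y - (\<Sum>d\<in>UNIV. Gam d c a y * g d b y + Gam d c b y * g a d y)
              = - UU c a y * l b y - UU c b y * l a y" using rc unfolding ring_connection_def by blast
lemma C2: "y \<in> S \<Longrightarrow> (pd c (l a) y - (\<Sum>d\<in>UNIV. Gam d c a y * l d y))
                 + (pd a (l c) y - (\<Sum>d\<in>UNIV. Gam d a c y * l d y))
              = - 2 * l2 y * UU c a y" using rc unfolding ring_connection_def by blast

lemma AA_ent[simp]:
  "AA y $ Some a $ Some b = g a b y" "AA y $ Some a $ None = l a y"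
  "AA y $ None $ Some b = l b y" "AA y $ None $ None = l2 y"
  by (simp_all add: Amat_def)

lemma AA_sm: "smooth_on S (\<lambda>y. AA y $ i $ j)"
  by (cases i; cases j) simp_all

lemma AA_trans: "transpose (AA y) = AA y"
  unfolding vec_eq_iff
proof (intro allI)
  fix i j show "transpose (AA y) $ i $ j = AA y $ i $ j"
    by (cases i; cases j) (simp_all add: gsym transpose_def)
qed

lemma Ai_sym: "y \<in> S \<Longrightarrow> Ai y $ i $ j = Ai y $ j $ i"
proof -
  assume y: "y \<in> S"
  have "Ai y $ i $ j = transpose (Ai y) $ j $ i" by (simp add: transpose_def)
  also have "transpose (Ai y) = Ai y" by (rule matrix_inv_sym[OF AA_inv[OF y] AA_trans])
  finally show ?thesis .
qed

lemma Ai_ent: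
  "Ai y $ Some a $ Some b = PP a b y" "Ai y $ Some a $ None = vn a y"
  by (simp_all add: Pm_def nv_def)

lemma Ai_ent2: "y \<in> S \<Longrightarrow> Ai y $ None $ Some a = vn a y"
  using Ai_sym[of y None "Some a"] Ai_ent by simp

lemma Ai_sm: "smooth_on S (\<lambda>y. Ai y $ i $ j)"
  by (rule smooth_matrix_inv[OF S_open AA_sm AA_inv])

lemma sm_n[simp]: "smooth_on S (vn a)"
proof -
  have "vn a = (\<lambda>y. Ai y $ Some a $ None)" by (simp add: fun_eq_iff nv_def)
  then show ?thesis using Ai_sm[of "Some a" None] by simp
qed
lemma sm_P[simp]: "smooth_on S (PP a b)"
proof -
  have "PP a b = (\<lambda>y. Ai y $ Some a $ Some b)" by (simp add: fun_eq_iff Pm_def)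
  then show ?thesis using Ai_sm[of "Some a" "Some b"] by simp
qed

lemma Psym: "y \<in> S \<Longrightarrow> PP a b y = PP b a y"
  using Ai_sym[of y "Some a" "Some b"] by (simp add: Ai_ent)

lemma mm_ent: "(X ** Y) $ i $ j = (\<Sum>k\<in>UNIV. X $ i $ k * Y $ k $ j)"
  by (simp add: matrix_matrix_mult_def)

lemma I1: "y \<in> S \<Longrightarrow> (\<Sum>b\<in>UNIV. g a b y * vn b y) = 0"
proof -
  assume y: "y \<in> S"
  have "(AA y ** Ai y) $ Some a $ None = 0" using matrix_inv_both(1)[OF AA_inv[OF y]] by (simp add: mat_def)
  then show ?thesis unfolding mm_ent sum_option using n2z[OF y] by (simp add: Ai_ent)
qed

lemma I2: "y \<in> S \<Longrightarrow> (\<Sum>b\<in>UNIV. l b y * vn b y) = 1"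
proof -
  assume y: "y \<in> S"
  have "(AA y ** Ai y) $ None $ None = 1" using matrix_inv_both(1)[OF AA_inv[OF y]] by (simp add: mat_def)
  then show ?thesis unfolding mm_ent sum_option using n2z[OF y] by (simp add: Ai_ent)
qed

lemma I3: "y \<in> S \<Longrightarrow> (\<Sum>b\<in>UNIV. PP a b y * l b y) = - l2 y * vn a y"
proof -
  assume y: "y \<in> S"
  have "(Ai y ** AA y) $ Some a $ None = 0" using matrix_inv_both(2)[OF AA_inv[OF y]] by (simp add: mat_def)
  then show ?thesis unfolding mm_ent sum_option by (simp add: Ai_ent algebra_simps)
qed

lemma I4: "y \<in> S \<Longrightarrow> (\<Sum>b\<in>UNIV. PP a b y * g b c y) = (if a = c then 1 else 0) - vn a y * l c y"
proof -
  assume y: "y \<in> S"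
  have "(Ai y ** AA y) $ Some a $ Some c = (if a = c then 1 else 0)" using matrix_inv_both(2)[OF AA_inv[OF y]] by (simp add: mat_def)
  then show ?thesis unfolding mm_ent sum_option by (simp add: Ai_ent algebra_simps)
qed

end

context ND begin

lemma sm_const[simp]: "smooth_on S (\<lambda>y. c)" by (rule smooth_const)
lemma sm_add[simp]: "smooth_on S f \<Longrightarrow> smooth_on S h \<Longrightarrow> smooth_on S (\<lambda>y. f y + h y)"
  by (rule smooth_add[OF S_open])
lemma sm_mult[simp]: "smooth_on S f \<Longrightarrow> smooth_on S h \<Longrightarrow> smooth_on S (\<lambda>y. f y * h y)"
  by (rule smooth_mult[OF S_open])
lemma sm_diff[simp]: "smooth_on S f \<Longrightarrow> smooth_on S h \<Longrightarrow> smooth_on S (\<lambda>y. f y - h y)"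
  by (rule smooth_diff[OF S_open])
lemma sm_minus[simp]: "smooth_on S f \<Longrightarrow> smooth_on S (\<lambda>y. - f y)"
  by (rule smooth_minus[OF S_open])
lemma sm_divc[simp]: "smooth_on S f \<Longrightarrow> smooth_on S (\<lambda>y. f y / c)"
  using smooth_mult[OF S_open, of f "\<lambda>y. inverse c"] by (simp add: divide_inverse smooth_const)
lemma sm_sum[simp]: fixes f :: "'b::finite \<Rightarrow> real^'n \<Rightarrow> real" shows "(\<And>a. smooth_on S (f a)) \<Longrightarrow> smooth_on S (\<lambda>y. \<Sum>a\<in>UNIV. f a y)"
  by (rule smooth_sum[OF S_open]) auto
lemma sm_pd[simp]: "smooth_on S f \<Longrightarrow> smooth_on S (pd i f)" by (rule smooth_pd)
lemma sm_dat[simp]: "y \<in> S \<Longrightarrow> smooth_on S f \<Longrightarrow> f differentiable at y"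
  by (rule smooth_diff_at[OF _ S_open])

lemma pd_divc:
  assumes "f differentiable at x"
  shows "pd i (\<lambda>y. f y / c) x = pd i f x / c"
  using pd_cmult[OF assms, of i "inverse c"] by (simp add: divide_inverse mult.commute)

lemma pd_sumU:
  fixes f :: "'b::finite \<Rightarrow> real^'n \<Rightarrow> real"
  assumes "\<And>a. f a differentiable at x"
  shows "pd i (\<lambda>y. \<Sum>a\<in>UNIV. f a y) x = (\<Sum>a\<in>UNIV. pd i (f a) x)"
  using pd_sum[of UNIV f x i] assms by simp

lemmas pds = pd_add pd_diff pd_mult pd_sumU pd_const pd_minus pd_divc

lemma U_fun: "UU a b = (\<lambda>y. (\<Sum>c\<in>UNIV. vn c y * pd c (g a b) y + g c b y * pd a (vn c) y + g a c y * pd b (vn c) y) / 2)"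
  by (simp add: fun_eq_iff Uf_def)
lemma F_fun: "Fm l a b = (\<lambda>y. (pd a (l b) y - pd b (l a) y) / 2)"
  by (simp add: fun_eq_iff Fm_def)
lemma s_fun: "ss b = (\<lambda>y. \<Sum>a\<in>UNIV. vn a y * Fm l a b y)"
  by (simp add: fun_eq_iff sv_def)
lemma trU_fun: "trU = (\<lambda>y. \<Sum>a\<in>UNIV. \<Sum>b\<in>UNIV. PP a b y * UU a b y)"
  by (simp add: fun_eq_iff trPU_def)

lemma sm_U[simp]: "smooth_on S (UU a b)" unfolding U_fun by simp
lemma sm_F[simp]: "smooth_on S (Fm l a b)" unfolding F_fun by simp
lemma sm_s[simp]: "smooth_on S (ss b)" unfolding s_fun by simp
lemma sm_trU[simp]: "smooth_on S trU" unfolding trU_fun by simp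

lemma Fanti: "Fm l a b y = - Fm l b a y" unfolding Fm_def by (simp add: field_simps)
lemma gsymf: "g a b = g b a" by (simp add: fun_eq_iff gsym)
lemma Usym: "UU a b y = UU b a y"
  unfolding Uf_def by (simp add: gsym gsymf[of a b] add_ac)

lemma pd_zero_on: "y \<in> S \<Longrightarrow> (\<And>z. z \<in> S \<Longrightarrow> f z = c) \<Longrightarrow> pd i f y = 0"
  using pd_local[OF S_open, of y f "\<lambda>z. c" i] by (simp add: pd_const)

lemma D1: "y \<in> S \<Longrightarrow> (\<Sum>b\<in>UNIV. pd c (g a b) y * vn b y) = - (\<Sum>b\<in>UNIV. g a b y * pd c (vn b) y)"
proof -
  assume y: "y \<in> S"
  have "pd c (\<lambda>z. \<Sum>b\<in>UNIV. g a b z * vn b z) y = 0" by (rule pd_zero_on[OF y]) (simp add: I1)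
  then show ?thesis using y by (simp add: pds sum.distrib eq_neg_iff_add_eq_0)
qed

lemma D2: "y \<in> S \<Longrightarrow> (\<Sum>b\<in>UNIV. pd c (l b) y * vn b y) = - (\<Sum>b\<in>UNIV. l b y * pd c (vn b) y)"
proof -
  assume y: "y \<in> S"
  have "pd c (\<lambda>z. \<Sum>b\<in>UNIV. l b z * vn b z) y = 0" by (rule pd_zero_on[OF y]) (simp add: I2)
  then show ?thesis using y by (simp add: pds sum.distrib eq_neg_iff_add_eq_0)
qed

lemma antisym_contract:
  fixes X :: "'n \<Rightarrow> 'n \<Rightarrow> real"
  assumes "\<And>a b. X a b = - X b a"
  shows "(\<Sum>a\<in>UNIV. \<Sum>b\<in>UNIV. w a * w b * X a b) = 0"
proof -
  let ?T = "(\<Sum>a\<in>UNIV. \<Sum>b\<in>UNIV. w a * w b * X a b)"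
  have "?T = (\<Sum>b\<in>UNIV. \<Sum>a\<in>UNIV. w a * w b * X a b)" by (rule sum.swap)
  also have "\<dots> = (\<Sum>b\<in>UNIV. \<Sum>a\<in>UNIV. - (w b * w a * X b a))"
  proof (intro sum.cong refl)
    fix a b show "w a * w b * X a b = - (w b * w a * X b a)" using assms[of a b] by simp
  qed
  also have "\<dots> = - ?T" by (simp add: sum_negf)
  finally show ?thesis by simp
qed

lemma sn: "(\<Sum>b\<in>UNIV. vn b y * ss b y) = 0"
proof -
  have "(\<Sum>b\<in>UNIV. vn b y * ss b y) = (\<Sum>b\<in>UNIV. \<Sum>a\<in>UNIV. vn a y * vn b y * Fm l a b y)"
    by (simp add: sv_def sum_distrib_left mult.commute mult.left_commute)
  also have "\<dots> = (\<Sum>a\<in>UNIV. \<Sum>b\<in>UNIV. vn a y * vn b y * Fm l a b y)" by (rule sum.swap)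
  also have "\<dots> = 0" by (rule antisym_contract) (rule Fanti)
  finally show ?thesis .
qed

lemma Dsn: "y \<in> S \<Longrightarrow> (\<Sum>b\<in>UNIV. pd c (vn b) y * ss b y) = - (\<Sum>b\<in>UNIV. vn b y * pd c (ss b) y)"
proof -
  assume y: "y \<in> S"
  have "pd c (\<lambda>z. \<Sum>b\<in>UNIV. vn b z * ss b z) y = 0" by (rule pd_zero_on[OF y]) (simp add: sn)
  then show ?thesis using y by (simp add: pds sum.distrib eq_neg_iff_add_eq_0)
qed

lemma Un: "y \<in> S \<Longrightarrow> (\<Sum>b\<in>UNIV. UU a b y * vn b y) = 0"
proof -
  assume y: "y \<in> S"
  have "2 * (UU a b y * vn b y) = (\<Sum>c\<in>UNIV. vn c y * pd c (g a b) y * vn b y)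
   + (\<Sum>c\<in>UNIV. g c b y * pd a (vn c) y * vn b y)
   + (\<Sum>c\<in>UNIV. g a c y * pd b (vn c) y * vn b y)" for b
    unfolding Uf_def by (simp add: sum_distrib_right sum.distrib ring_distribs) (simp add: sum_distrib_right[symmetric])
  then have "2 * (\<Sum>b\<in>UNIV. UU a b y * vn b y) =
     (\<Sum>b\<in>UNIV. \<Sum>c\<in>UNIV. vn c y * pd c (g a b) y * vn b y)
   + (\<Sum>b\<in>UNIV. \<Sum>c\<in>UNIV. g c b y * pd a (vn c) y * vn b y)
   + (\<Sum>b\<in>UNIV. \<Sum>c\<in>UNIV. g a c y * pd b (vn c) y * vn b y)"
    by (simp add: sum_distrib_left sum.distrib)
  also have "(\<Sum>b\<in>UNIV. \<Sum>c\<in>UNIV. vn c y * pd c (g a b) y * vn b y)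
      = (\<Sum>c\<in>UNIV. vn c y * (\<Sum>b\<in>UNIV. pd c (g a b) y * vn b y))"
    by (subst sum.swap) (simp add: sum_distrib_left mult.assoc)
  also have "\<dots> = - (\<Sum>c\<in>UNIV. \<Sum>b\<in>UNIV. vn c y * g a b y * pd c (vn b) y)"
    using D1[OF y] by (simp add: sum_distrib_left sum_negf[symmetric] mult.assoc)
  also have "(\<Sum>b\<in>UNIV. \<Sum>c\<in>UNIV. g c b y * pd a (vn c) y * vn b y)
      = (\<Sum>c\<in>UNIV. pd a (vn c) y * (\<Sum>b\<in>UNIV. g c b y * vn b y))"
    by (subst sum.swap) (simp add: sum_distrib_left mult.commute mult.left_commute)
  also have "\<dots> = 0" using I1[OF y] by simp
  also have "(\<Sum>b\<in>UNIV. \<Sum>c\<in>UNIV. g a c y * pd b (vn c) y * vn b y)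
      = (\<Sum>c\<in>UNIV. \<Sum>b\<in>UNIV. vn c y * g a b y * pd c (vn b) y)"
    by (simp add: mult.commute mult.left_commute)
  finally show ?thesis by simp
qed

lemma DUn: "y \<in> S \<Longrightarrow> (\<Sum>b\<in>UNIV. pd c (UU a b) y * vn b y) = - (\<Sum>b\<in>UNIV. UU a b y * pd c (vn b) y)"
proof -
  assume y: "y \<in> S"
  have "pd c (\<lambda>z. \<Sum>b\<in>UNIV. UU a b z * vn b z) y = 0" by (rule pd_zero_on[OF y]) (simp add: Un)
  then show ?thesis using y by (simp add: pds sum.distrib eq_neg_iff_add_eq_0)
qed

end

context ND begin

definition "Gm a c d y = (\<Sum>b\<in>UNIV. g a b y * Gam b c d y)"
definition "Lm c d y = (\<Sum>b\<in>UNIV. l b y * Gam b c d y)"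

lemma C1': "y \<in> S \<Longrightarrow> pd c (g a b) y = Gm b c a y + Gm a c b y - UU c a y * l b y - UU c b y * l a y"
proof -
  assume y: "y \<in> S"
  have "(\<Sum>d\<in>UNIV. Gam d c a y * g d b y + Gam d c b y * g a d y) = Gm b c a y + Gm a c b y"
    unfolding Gm_def by (simp add: sum.distrib gsym[of _ b] mult.commute)
  then show ?thesis using C1[OF y, of c a b] by linarith
qed

lemma Gm_sym: "y \<in> S \<Longrightarrow> Gm a c d y = Gm a d c y"
  unfolding Gm_def using Gsym by simp

lemma Lm_sym: "y \<in> S \<Longrightarrow> Lm c d y = Lm d c y"
  unfolding Lm_def using Gsym by simp

lemma Koszul: "y \<in> S \<Longrightarrow> Gm a c d y = (pd c (g a d) y + pd d (g a c) y - pd a (g c d) y) / 2 + UU c d y * l a y"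
proof -
  assume y: "y \<in> S"
  have i: "pd c (g a d) y = Gm d c a y + Gm a c d y - UU a c y * l d y - UU c d y * l a y"
    using C1'[OF y, of c a d] Usym[of c a y] by simp
  have ii: "pd d (g a c) y = Gm c a d y + Gm a c d y - UU a d y * l c y - UU c d y * l a y"
    using C1'[OF y, of d a c] Usym[of d a y] Usym[of d c y] Gm_sym[OF y, of c d a] Gm_sym[OF y, of a d c] by simp
  have iii: "pd a (g c d) y = Gm d c a y + Gm c a d y - UU a c y * l d y - UU a d y * l c y"
    using C1'[OF y, of a c d] Gm_sym[OF y, of d a c] by simp
  show ?thesis using i ii iii by (simp add: field_simps)
qed

lemma Lm_formula: "y \<in> S \<Longrightarrow> Lm c d y = (pd c (l d) y + pd d (l c) y) / 2 + l2 y * UU c d y"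
proof -
  assume y: "y \<in> S"
  have "(pd c (l d) y - Lm c d y) + (pd d (l c) y - Lm d c y) = - 2 * l2 y * UU c d y"
    using C2[OF y, of c d] unfolding Lm_def by (simp add: mult.commute)
  then show ?thesis using Lm_sym[OF y, of c d] by (simp add: field_simps)
qed

lemma delta_sum: fixes f :: "'n" shows "(\<Sum>b\<in>UNIV. (if f = b then 1 else 0) * (h b :: real)) = h f"
proof -
  have "\<And>b. (if f = b then 1 else 0) * h b = (if f = b then h b else 0)" by simp
  then show ?thesis by (simp add: sum.delta')
qed

lemma GX: "y \<in> S \<Longrightarrow> Gam f c d y = (\<Sum>a\<in>UNIV. PP f a y * Gm a c d y) + vn f y * Lm c d y"
proof -
  assume y: "y \<in> S"
  have "(\<Sum>a\<in>UNIV. PP f a y * Gm a c d y) = (\<Sum>a\<in>UNIV. \<Sum>b\<in>UNIV. PP f a y * g a b y * Gam b c d y)"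
    unfolding Gm_def by (simp add: sum_distrib_left mult.assoc)
  also have "\<dots> = (\<Sum>b\<in>UNIV. (\<Sum>a\<in>UNIV. PP f a y * g a b y) * Gam b c d y)"
    by (subst sum.swap) (simp add: sum_distrib_right)
  also have "\<dots> = (\<Sum>b\<in>UNIV. ((if f = b then 1 else 0) - vn f y * l b y) * Gam b c d y)"
    using I4[OF y] by simp
  also have "\<dots> = Gam f c d y - vn f y * Lm c d y"
    unfolding Lm_def by (simp add: left_diff_distrib sum_subtractf delta_sum sum_distrib_left mult.assoc)
  finally show ?thesis by simp
qed

lemma GXe: "y \<in> S \<Longrightarrow> Gam f c d y =
   (\<Sum>a\<in>UNIV. PP f a y * (pd c (g a d) y + pd d (g a c) y - pd a (g c d) y)) / 2
   + vn f y * (pd c (l d) y + pd d (l c) y) / 2"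
proof -
  assume y: "y \<in> S"
  have "(\<Sum>a\<in>UNIV. PP f a y * Gm a c d y) =
     (\<Sum>a\<in>UNIV. PP f a y * (pd c (g a d) y + pd d (g a c) y - pd a (g c d) y)) / 2
     + UU c d y * (\<Sum>a\<in>UNIV. PP f a y * l a y)"
    using Koszul[OF y] by (simp add: ring_distribs sum.distrib sum_divide_distrib sum_distrib_left mult.commute mult.left_commute)
  also have "(\<Sum>a\<in>UNIV. PP f a y * l a y) = - l2 y * vn f y" by (rule I3[OF y])
  finally show ?thesis using GX[OF y, of f c d] Lm_formula[OF y, of c d] by (simp add: algebra_simps)
qed

end

context ND begin

lemma GX2: "y \<in> S \<Longrightarrow> 2 * Gam f c d y =
   (\<Sum>a\<in>UNIV. PP f a y * (pd c (g a d) y + pd d (g a c) y - pd a (g c d) y))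
   + vn f y * (pd c (l d) y + pd d (l c) y)"
  using GXe[of y f c d] by simp

lemma Na: "y \<in> S \<Longrightarrow> pd b (vn c) y + (\<Sum>d\<in>UNIV. Gam c b d y * vn d y)
   = ss b y * vn c y + (\<Sum>f\<in>UNIV. PP c f y * UU b f y)"
proof -
  assume y: "y \<in> S"
  have e1: "2 * (\<Sum>d\<in>UNIV. Gam c b d y * vn d y) =
      (\<Sum>d\<in>UNIV. \<Sum>a\<in>UNIV. PP c a y * pd b (g a d) y * vn d y)
    + (\<Sum>d\<in>UNIV. \<Sum>a\<in>UNIV. PP c a y * pd d (g a b) y * vn d y)
    - (\<Sum>d\<in>UNIV. \<Sum>a\<in>UNIV. PP c a y * pd a (g b d) y * vn d y)
    + vn c y * (\<Sum>d\<in>UNIV. pd b (l d) y * vn d y)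
    + vn c y * (\<Sum>d\<in>UNIV. pd d (l b) y * vn d y)"
  proof -
    have "2 * (\<Sum>d\<in>UNIV. Gam c b d y * vn d y) = (\<Sum>d\<in>UNIV. (2 * Gam c b d y) * vn d y)"
      by (simp add: sum_distrib_left mult.assoc)
    also have "\<dots> = (\<Sum>d\<in>UNIV. ((\<Sum>a\<in>UNIV. PP c a y * (pd b (g a d) y + pd d (g a b) y - pd a (g b d) y))
         + vn c y * (pd b (l d) y + pd d (l b) y)) * vn d y)"
      using GX2[OF y] by simp
    also have "\<dots> = (\<Sum>d\<in>UNIV. \<Sum>a\<in>UNIV. PP c a y * pd b (g a d) y * vn d y)
    + (\<Sum>d\<in>UNIV. \<Sum>a\<in>UNIV. PP c a y * pd d (g a b) y * vn d y)
    - (\<Sum>d\<in>UNIV. \<Sum>a\<in>UNIV. PP c a y * pd a (g b d) y * vn d y)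
    + vn c y * (\<Sum>d\<in>UNIV. pd b (l d) y * vn d y)
    + vn c y * (\<Sum>d\<in>UNIV. pd d (l b) y * vn d y)"
      by (simp add: algebra_simps sum.distrib sum_subtractf sum_distrib_left sum_distrib_right)
    finally show ?thesis .
  qed
  have dl: "(\<Sum>d\<in>UNIV. l d y * pd b (vn d) y) = - (\<Sum>d\<in>UNIV. pd b (l d) y * vn d y)"
    using D2[OF y, of b] by simp
  have x1: "(\<Sum>d\<in>UNIV. \<Sum>a\<in>UNIV. PP c a y * pd b (g a d) y * vn d y)
      = - pd b (vn c) y - vn c y * (\<Sum>d\<in>UNIV. pd b (l d) y * vn d y)"
  proof -
    have "(\<Sum>d\<in>UNIV. \<Sum>a\<in>UNIV. PP c a y * pd b (g a d) y * vn d y)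
        = (\<Sum>a\<in>UNIV. PP c a y * (\<Sum>d\<in>UNIV. pd b (g a d) y * vn d y))"
      by (subst sum.swap) (simp add: sum_distrib_left mult.assoc)
    also have "\<dots> = (\<Sum>a\<in>UNIV. PP c a y * (- (\<Sum>d\<in>UNIV. g a d y * pd b (vn d) y)))"
      using D1[OF y] by simp
    also have "\<dots> = - (\<Sum>a\<in>UNIV. \<Sum>d\<in>UNIV. PP c a y * g a d y * pd b (vn d) y)"
      by (simp add: sum_distrib_left sum_negf mult.assoc)
    also have "\<dots> = - (\<Sum>d\<in>UNIV. \<Sum>a\<in>UNIV. PP c a y * g a d y * pd b (vn d) y)"
      by (subst sum.swap) simp
    also have "\<dots> = - (\<Sum>d\<in>UNIV. (\<Sum>a\<in>UNIV. PP c a y * g a d y) * pd b (vn d) y)"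
      by (simp add: sum_distrib_right)
    also have "\<dots> = - (\<Sum>d\<in>UNIV. ((if c = d then 1 else 0) - vn c y * l d y) * pd b (vn d) y)"
      using I4[OF y] by simp
    also have "\<dots> = - pd b (vn c) y + vn c y * (\<Sum>d\<in>UNIV. l d y * pd b (vn d) y)"
      by (simp add: left_diff_distrib sum_subtractf delta_sum sum_distrib_left mult.assoc)
    finally show ?thesis using dl by simp
  qed
  have x3: "(\<Sum>d\<in>UNIV. \<Sum>a\<in>UNIV. PP c a y * pd a (g b d) y * vn d y)
      = - (\<Sum>a\<in>UNIV. \<Sum>d\<in>UNIV. PP c a y * g b d y * pd a (vn d) y)"
  proof -
    have "(\<Sum>d\<in>UNIV. \<Sum>a\<in>UNIV. PP c a y * pd a (g b d) y * vn d y)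
        = (\<Sum>a\<in>UNIV. PP c a y * (\<Sum>d\<in>UNIV. pd a (g b d) y * vn d y))"
      by (subst sum.swap) (simp add: sum_distrib_left mult.assoc)
    also have "\<dots> = (\<Sum>a\<in>UNIV. PP c a y * (- (\<Sum>d\<in>UNIV. g b d y * pd a (vn d) y)))"
      using D1[OF y] by simp
    finally show ?thesis by (simp add: sum_distrib_left sum_negf mult.assoc)
  qed
  have pu: "2 * (\<Sum>f\<in>UNIV. PP c f y * UU b f y) =
      (\<Sum>f\<in>UNIV. \<Sum>d\<in>UNIV. PP c f y * vn d y * pd d (g b f) y)
    + (\<Sum>f\<in>UNIV. \<Sum>d\<in>UNIV. PP c f y * g d f y * pd b (vn d) y)
    + (\<Sum>f\<in>UNIV. \<Sum>d\<in>UNIV. PP c f y * g b d y * pd f (vn d) y)"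
  proof -
    have "2 * (PP c f y * UU b f y) = (\<Sum>d\<in>UNIV. PP c f y * vn d y * pd d (g b f) y)
      + (\<Sum>d\<in>UNIV. PP c f y * g d f y * pd b (vn d) y)
      + (\<Sum>d\<in>UNIV. PP c f y * g b d y * pd f (vn d) y)" for f
      unfolding Uf_def by (simp add: sum_distrib_left sum.distrib ring_distribs mult.assoc) (simp add: sum_distrib_left[symmetric] mult.commute)
    then show ?thesis by (simp add: sum_distrib_left sum.distrib)
  qed
  have y1: "(\<Sum>f\<in>UNIV. \<Sum>d\<in>UNIV. PP c f y * vn d y * pd d (g b f) y)
      = (\<Sum>d\<in>UNIV. \<Sum>a\<in>UNIV. PP c a y * pd d (g a b) y * vn d y)"
    by (subst sum.swap) (simp add: gsymf[of b] mult.commute mult.left_commute)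
  have y2: "(\<Sum>f\<in>UNIV. \<Sum>d\<in>UNIV. PP c f y * g d f y * pd b (vn d) y)
      = pd b (vn c) y + vn c y * (\<Sum>d\<in>UNIV. pd b (l d) y * vn d y)"
  proof -
    have "(\<Sum>f\<in>UNIV. \<Sum>d\<in>UNIV. PP c f y * g d f y * pd b (vn d) y)
        = (\<Sum>d\<in>UNIV. (\<Sum>f\<in>UNIV. PP c f y * g f d y) * pd b (vn d) y)"
      by (subst sum.swap) (simp add: sum_distrib_right gsym)
    also have "\<dots> = (\<Sum>d\<in>UNIV. ((if c = d then 1 else 0) - vn c y * l d y) * pd b (vn d) y)"
      using I4[OF y] by simp
    also have "\<dots> = pd b (vn c) y - vn c y * (\<Sum>d\<in>UNIV. l d y * pd b (vn d) y)"
      by (simp add: left_diff_distrib sum_subtractf delta_sum sum_distrib_left mult.assoc)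
    finally show ?thesis using dl by simp
  qed
  have y3: "(\<Sum>f\<in>UNIV. \<Sum>d\<in>UNIV. PP c f y * g b d y * pd f (vn d) y)
      = (\<Sum>a\<in>UNIV. \<Sum>d\<in>UNIV. PP c a y * g b d y * pd a (vn d) y)" by simp
  have sb: "2 * ss b y = (\<Sum>d\<in>UNIV. pd d (l b) y * vn d y) - (\<Sum>d\<in>UNIV. pd b (l d) y * vn d y)"
  proof -
    have "\<And>a. 2 * (vn a y * Fm l a b y) = pd a (l b) y * vn a y - pd b (l a) y * vn a y"
      by (simp add: Fm_def field_simps)
    then show ?thesis unfolding sv_def by (simp add: sum_distrib_left sum_subtractf[symmetric])
  qed
  have "2 * (pd b (vn c) y + (\<Sum>d\<in>UNIV. Gam c b d y * vn d y)) = 2 * (ss b y * vn c y + (\<Sum>f\<in>UNIV. PP c f y * UU b f y))"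
  proof -
    have l: "2 * (pd b (vn c) y + (\<Sum>d\<in>UNIV. Gam c b d y * vn d y)) = 2 * pd b (vn c) y + 2 * (\<Sum>d\<in>UNIV. Gam c b d y * vn d y)"
      by simp
    have r: "2 * (ss b y * vn c y + (\<Sum>f\<in>UNIV. PP c f y * UU b f y)) = (2 * ss b y) * vn c y + 2 * (\<Sum>f\<in>UNIV. PP c f y * UU b f y)"
      by simp
    have sbv1: "2 * ss b y * vn c y = ((\<Sum>d\<in>UNIV. pd d (l b) y * vn d y) - (\<Sum>d\<in>UNIV. pd b (l d) y * vn d y)) * vn c y"
      by (simp only: sb)
    have sbv2: "((\<Sum>d\<in>UNIV. pd d (l b) y * vn d y) - (\<Sum>d\<in>UNIV. pd b (l d) y * vn d y)) * vn c y
       = vn c y * (\<Sum>d\<in>UNIV. pd d (l b) y * vn d y) - vn c y * (\<Sum>d\<in>UNIV. pd b (l d) y * vn d y)"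
      by (simp add: algebra_simps)
    show ?thesis using l r e1 pu x1 x3 y1 y2 y3 sbv1 sbv2 by linarith
  qed
  then show ?thesis by simp
qed

end

context ND begin

lemma s2: "2 * ss b y = (\<Sum>d\<in>UNIV. pd d (l b) y * vn d y) - (\<Sum>d\<in>UNIV. pd b (l d) y * vn d y)"
proof -
  have "\<And>a. 2 * (vn a y * Fm l a b y) = pd a (l b) y * vn a y - pd b (l a) y * vn a y"
    by (simp add: Fm_def field_simps)
  then show ?thesis unfolding sv_def by (simp add: sum_distrib_left sum_subtractf[symmetric])
qed

lemma trG: "y \<in> S \<Longrightarrow> 2 * (\<Sum>c\<in>UNIV. Gam c c e y) =
   (\<Sum>c\<in>UNIV. \<Sum>a\<in>UNIV. PP c a y * pd e (g a c) y) + 2 * (\<Sum>c\<in>UNIV. vn c y * pd e (l c) y) + 2 * ss e y"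
proof -
  assume y: "y \<in> S"
  have "2 * (\<Sum>c\<in>UNIV. Gam c c e y) = (\<Sum>c\<in>UNIV. 2 * Gam c c e y)" by (simp add: sum_distrib_left)
  also have "\<dots> = (\<Sum>c\<in>UNIV. (\<Sum>a\<in>UNIV. PP c a y * (pd c (g a e) y + pd e (g a c) y - pd a (g c e) y))
       + vn c y * (pd c (l e) y + pd e (l c) y))" using GX2[OF y] by simp
  also have "\<dots> = (\<Sum>c\<in>UNIV. \<Sum>a\<in>UNIV. PP c a y * pd c (g a e) y)
     + (\<Sum>c\<in>UNIV. \<Sum>a\<in>UNIV. PP c a y * pd e (g a c) y)
     - (\<Sum>c\<in>UNIV. \<Sum>a\<in>UNIV. PP c a y * pd a (g c e) y)
     + (\<Sum>c\<in>UNIV. pd c (l e) y * vn c y) + (\<Sum>c\<in>UNIV. vn c y * pd e (l c) y)"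
    by (simp add: algebra_simps sum.distrib sum_subtractf)
  also have "(\<Sum>c\<in>UNIV. \<Sum>a\<in>UNIV. PP c a y * pd a (g c e) y) = (\<Sum>c\<in>UNIV. \<Sum>a\<in>UNIV. PP c a y * pd c (g a e) y)"
    by (subst sum.swap) (simp add: Psym[OF y])
  finally show ?thesis using s2[of e y] by (simp add: algebra_simps)
qed

lemma PG: "y \<in> S \<Longrightarrow> 2 * (\<Sum>c\<in>UNIV. \<Sum>d\<in>UNIV. Gam f c d y * PP c d y) =
    2 * (\<Sum>c\<in>UNIV. \<Sum>d\<in>UNIV. \<Sum>a\<in>UNIV. PP f a y * pd c (g a d) y * PP c d y)
  - (\<Sum>c\<in>UNIV. \<Sum>d\<in>UNIV. \<Sum>a\<in>UNIV. PP f a y * pd a (g c d) y * PP c d y)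
  + 2 * vn f y * (\<Sum>c\<in>UNIV. \<Sum>d\<in>UNIV. pd c (l d) y * PP c d y)"
proof -
  assume y: "y \<in> S"
  have "2 * (\<Sum>c\<in>UNIV. \<Sum>d\<in>UNIV. Gam f c d y * PP c d y) = (\<Sum>c\<in>UNIV. \<Sum>d\<in>UNIV. (2 * Gam f c d y) * PP c d y)"
    by (simp add: sum_distrib_left mult.assoc)
  also have "\<dots> = (\<Sum>c\<in>UNIV. \<Sum>d\<in>UNIV. ((\<Sum>a\<in>UNIV. PP f a y * (pd c (g a d) y + pd d (g a c) y - pd a (g c d) y))
       + vn f y * (pd c (l d) y + pd d (l c) y)) * PP c d y)" using GX2[OF y] by simp
  also have "\<dots> = (\<Sum>c\<in>UNIV. \<Sum>d\<in>UNIV. \<Sum>a\<in>UNIV. PP f a y * pd c (g a d) y * PP c d y)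
     + (\<Sum>c\<in>UNIV. \<Sum>d\<in>UNIV. \<Sum>a\<in>UNIV. PP f a y * pd d (g a c) y * PP c d y)
     - (\<Sum>c\<in>UNIV. \<Sum>d\<in>UNIV. \<Sum>a\<in>UNIV. PP f a y * pd a (g c d) y * PP c d y)
     + vn f y * (\<Sum>c\<in>UNIV. \<Sum>d\<in>UNIV. pd c (l d) y * PP c d y)
     + vn f y * (\<Sum>c\<in>UNIV. \<Sum>d\<in>UNIV. pd d (l c) y * PP c d y)"
    by (simp add: algebra_simps sum.distrib sum_subtractf sum_distrib_left sum_distrib_right)
  also have "(\<Sum>c\<in>UNIV. \<Sum>d\<in>UNIV. \<Sum>a\<in>UNIV. PP f a y * pd d (g a c) y * PP c d y)
      = (\<Sum>c\<in>UNIV. \<Sum>d\<in>UNIV. \<Sum>a\<in>UNIV. PP f a y * pd c (g a d) y * PP c d y)"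
    by (subst sum.swap) (simp add: Psym[OF y])
  also have "(\<Sum>c\<in>UNIV. \<Sum>d\<in>UNIV. pd d (l c) y * PP c d y) = (\<Sum>c\<in>UNIV. \<Sum>d\<in>UNIV. pd c (l d) y * PP c d y)"
    by (subst sum.swap) (simp add: Psym[OF y])
  finally show ?thesis by (simp add: algebra_simps)
qed

lemma AA_fun: "(\<lambda>z. AA z $ Some a $ Some b) = g a b" "(\<lambda>z. AA z $ Some a $ None) = l a"
  "(\<lambda>z. AA z $ None $ Some b) = l b" "(\<lambda>z. AA z $ None $ None) = l2"
  by (simp_all add: fun_eq_iff)

lemma Ai_fun: "(\<lambda>z. Ai z $ Some a $ Some b) = PP a b" "(\<lambda>z. Ai z $ Some a $ None) = vn a"
  by (simp_all add: fun_eq_iff Pm_def nv_def)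

lemma dAi: "y \<in> S \<Longrightarrow> pd e (\<lambda>z. Ai z $ i $ m) y =
    - (\<Sum>k\<in>UNIV. \<Sum>j\<in>UNIV. Ai y $ i $ k * pd e (\<lambda>z. AA z $ k $ j) y * Ai y $ j $ m)"
proof -
  assume y: "y \<in> S"
  have sA: "smooth_on S (\<lambda>z. AA z $ k $ j)" for k j by (rule AA_sm)
  have sI: "smooth_on S (\<lambda>z. Ai z $ k $ j)" for k j by (rule Ai_sm)
  have d0: "(\<Sum>k\<in>UNIV. pd e (\<lambda>z. Ai z $ i $ k) y * AA y $ k $ j + Ai y $ i $ k * pd e (\<lambda>z. AA z $ k $ j) y) = 0" for j
  proof -
    have "pd e (\<lambda>z. \<Sum>k\<in>UNIV. Ai z $ i $ k * AA z $ k $ j) y = 0"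
    proof (rule pd_zero_on[OF y])
      fix z assume z: "z \<in> S"
      show "(\<Sum>k\<in>UNIV. Ai z $ i $ k * AA z $ k $ j) = (mat 1 :: real^'n option^'n option) $ i $ j"
        using matrix_inv_both(2)[OF AA_inv[OF z]] by (simp add: mm_ent[symmetric])
    qed
    then show ?thesis using y sA sI by (simp add: pds)
  qed
  have "0 = (\<Sum>j\<in>UNIV. (\<Sum>k\<in>UNIV. pd e (\<lambda>z. Ai z $ i $ k) y * AA y $ k $ j + Ai y $ i $ k * pd e (\<lambda>z. AA z $ k $ j) y) * Ai y $ j $ m)"
    using d0 by simp
  also have "\<dots> = (\<Sum>j\<in>UNIV. \<Sum>k\<in>UNIV. pd e (\<lambda>z. Ai z $ i $ k) y * AA y $ k $ j * Ai y $ j $ m)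
     + (\<Sum>j\<in>UNIV. \<Sum>k\<in>UNIV. Ai y $ i $ k * pd e (\<lambda>z. AA z $ k $ j) y * Ai y $ j $ m)"
    by (simp add: sum_distrib_right sum.distrib ring_distribs)
  also have "(\<Sum>j\<in>UNIV. \<Sum>k\<in>UNIV. pd e (\<lambda>z. Ai z $ i $ k) y * AA y $ k $ j * Ai y $ j $ m)
      = (\<Sum>k\<in>UNIV. pd e (\<lambda>z. Ai z $ i $ k) y * (\<Sum>j\<in>UNIV. AA y $ k $ j * Ai y $ j $ m))"
    by (subst sum.swap) (simp add: sum_distrib_left mult.assoc)
  also have "\<dots> = (\<Sum>k\<in>UNIV. pd e (\<lambda>z. Ai z $ i $ k) y * (if k = m then 1 else 0))"
  proof -
    have "(\<Sum>j\<in>UNIV. AA y $ k $ j * Ai y $ j $ m) = (if k = m then 1 else 0)" for k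
      using matrix_inv_both(1)[OF AA_inv[OF y]] by (simp add: mm_ent[symmetric] mat_def)
    then show ?thesis by simp
  qed
  also have "\<dots> = pd e (\<lambda>z. Ai z $ i $ m) y" by (simp add: if_distrib cong: if_cong)
  also have "(\<Sum>j\<in>UNIV. \<Sum>k\<in>UNIV. Ai y $ i $ k * pd e (\<lambda>z. AA z $ k $ j) y * Ai y $ j $ m)
     = (\<Sum>k\<in>UNIV. \<Sum>j\<in>UNIV. Ai y $ i $ k * pd e (\<lambda>z. AA z $ k $ j) y * Ai y $ j $ m)"
    by (rule sum.swap)
  finally show ?thesis by linarith
qed

lemma dP: "y \<in> S \<Longrightarrow> pd e (PP a b) y =
   - (vn a y * pd e l2 y * vn b y + vn a y * (\<Sum>d\<in>UNIV. pd e (l d) y * PP d b y)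
      + (\<Sum>c\<in>UNIV. PP a c y * pd e (l c) y) * vn b y
      + (\<Sum>c\<in>UNIV. \<Sum>d\<in>UNIV. PP a c y * pd e (g c d) y * PP d b y))"
proof -
  assume y: "y \<in> S"
  have "pd e (PP a b) y = pd e (\<lambda>z. Ai z $ Some a $ Some b) y" by (simp add: Ai_fun)
  also have "\<dots> = - (\<Sum>k\<in>UNIV. \<Sum>j\<in>UNIV. Ai y $ Some a $ k * pd e (\<lambda>z. AA z $ k $ j) y * Ai y $ j $ Some b)"
    by (rule dAi[OF y])
  also have "\<dots> = - (vn a y * pd e l2 y * vn b y + vn a y * (\<Sum>d\<in>UNIV. pd e (l d) y * PP d b y)
      + (\<Sum>c\<in>UNIV. PP a c y * pd e (l c) y) * vn b y
      + (\<Sum>c\<in>UNIV. \<Sum>d\<in>UNIV. PP a c y * pd e (g c d) y * PP d b y))"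
    by (simp add: sum_option Ai_ent Ai_ent2[OF y] AA_fun sum.distrib sum_distrib_left sum_distrib_right algebra_simps)
  finally show ?thesis .
qed

end

context ND begin

lemma divP: "y \<in> S \<Longrightarrow>
  (\<Sum>c\<in>UNIV. pd c (PP c f) y) + (\<Sum>e\<in>UNIV. (\<Sum>c\<in>UNIV. Gam c c e y) * PP e f y)
   + (\<Sum>c\<in>UNIV. \<Sum>d\<in>UNIV. Gam f c d y * PP c d y)
  = - (\<Sum>e\<in>UNIV. PP f e y * ss e y) - vn f y * (\<Sum>c\<in>UNIV. vn c y * pd c l2 y)"
proof -
  assume y: "y \<in> S"
  define A1 where "A1 = (\<Sum>c\<in>UNIV. \<Sum>b\<in>UNIV. \<Sum>d\<in>UNIV. PP c b y * pd c (g b d) y * PP d f y)"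
  define A2 where "A2 = (\<Sum>c\<in>UNIV. \<Sum>b\<in>UNIV. PP c b y * pd c (l b) y)"
  define A3 where "A3 = (\<Sum>c\<in>UNIV. vn c y * (\<Sum>d\<in>UNIV. pd c (l d) y * PP d f y))"
  define A4 where "A4 = (\<Sum>c\<in>UNIV. vn c y * pd c l2 y)"
  define B1 where "B1 = (\<Sum>e\<in>UNIV. (\<Sum>c\<in>UNIV. \<Sum>a\<in>UNIV. PP c a y * pd e (g a c) y) * PP e f y)"
  define B2 where "B2 = (\<Sum>e\<in>UNIV. (\<Sum>c\<in>UNIV. vn c y * pd e (l c) y) * PP e f y)"
  define B3 where "B3 = (\<Sum>e\<in>UNIV. ss e y * PP e f y)"
  define Q1 where "Q1 = (\<Sum>c\<in>UNIV. \<Sum>d\<in>UNIV. \<Sum>a\<in>UNIV. PP f a y * pd c (g a d) y * PP c d y)"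
  define Q3 where "Q3 = (\<Sum>c\<in>UNIV. \<Sum>d\<in>UNIV. \<Sum>a\<in>UNIV. PP f a y * pd a (g c d) y * PP c d y)"
  define Q4 where "Q4 = (\<Sum>c\<in>UNIV. \<Sum>d\<in>UNIV. pd c (l d) y * PP c d y)"
  have h1: "(\<Sum>c\<in>UNIV. pd c (PP c f) y) = - (vn f y * A4) - A3 - vn f y * A2 - A1"
  proof -
    have "(\<Sum>c\<in>UNIV. pd c (PP c f) y) = - ((\<Sum>c\<in>UNIV. vn c y * pd c l2 y * vn f y)
       + (\<Sum>c\<in>UNIV. vn c y * (\<Sum>d\<in>UNIV. pd c (l d) y * PP d f y))
       + (\<Sum>c\<in>UNIV. (\<Sum>b\<in>UNIV. PP c b y * pd c (l b) y) * vn f y)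
       + (\<Sum>c\<in>UNIV. \<Sum>b\<in>UNIV. \<Sum>d\<in>UNIV. PP c b y * pd c (g b d) y * PP d f y))"
      by (simp only: dP[OF y] sum_negf sum.distrib)
    moreover have "(\<Sum>c\<in>UNIV. vn c y * pd c l2 y * vn f y) = vn f y * A4"
      unfolding A4_def by (simp add: sum_distrib_left mult.commute mult.left_commute)
    moreover have "(\<Sum>c\<in>UNIV. (\<Sum>b\<in>UNIV. PP c b y * pd c (l b) y) * vn f y) = vn f y * A2"
      unfolding A2_def by (simp add: sum_distrib_left sum_distrib_right mult.commute mult.left_commute)
    ultimately show ?thesis unfolding A1_def A3_def by linarith
  qed
  have h2: "2 * (\<Sum>e\<in>UNIV. (\<Sum>c\<in>UNIV. Gam c c e y) * PP e f y) = B1 + 2 * B2 + 2 * B3"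
  proof -
    have "2 * (\<Sum>e\<in>UNIV. (\<Sum>c\<in>UNIV. Gam c c e y) * PP e f y) = (\<Sum>e\<in>UNIV. 2 * ((\<Sum>c\<in>UNIV. Gam c c e y) * PP e f y))"
      by (rule sum_distrib_left)
    also have "\<dots> = (\<Sum>e\<in>UNIV. (2 * (\<Sum>c\<in>UNIV. Gam c c e y)) * PP e f y)"
      by (simp only: mult.assoc)
    also have "\<dots> = (\<Sum>e\<in>UNIV. ((\<Sum>c\<in>UNIV. \<Sum>a\<in>UNIV. PP c a y * pd e (g a c) y) + 2 * (\<Sum>c\<in>UNIV. vn c y * pd e (l c) y) + 2 * ss e y) * PP e f y)"
      by (simp only: trG[OF y])
    also have "\<dots> = (\<Sum>e\<in>UNIV. (\<Sum>c\<in>UNIV. \<Sum>a\<in>UNIV. PP c a y * pd e (g a c) y) * PP e f y)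
       + (\<Sum>e\<in>UNIV. (2 * (\<Sum>c\<in>UNIV. vn c y * pd e (l c) y)) * PP e f y)
       + (\<Sum>e\<in>UNIV. (2 * ss e y) * PP e f y)"
      by (simp only: distrib_right sum.distrib)
    also have "(\<Sum>e\<in>UNIV. (2 * (\<Sum>c\<in>UNIV. vn c y * pd e (l c) y)) * PP e f y) = 2 * B2"
      unfolding B2_def by (simp only: mult.assoc sum_distrib_left[symmetric])
    also have "(\<Sum>e\<in>UNIV. (2 * ss e y) * PP e f y) = 2 * B3"
      unfolding B3_def by (simp only: mult.assoc sum_distrib_left[symmetric])
    finally show ?thesis unfolding B1_def .
  qed
  have h3: "2 * (\<Sum>c\<in>UNIV. \<Sum>d\<in>UNIV. Gam f c d y * PP c d y) = 2 * Q1 - Q3 + 2 * vn f y * Q4"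
    unfolding Q1_def Q3_def Q4_def by (rule PG[OF y])
  have r1: "A1 = Q1"
    unfolding A1_def Q1_def
  proof (intro sum.cong refl)
    fix c b d show "PP c b y * pd c (g b d) y * PP d f y = PP f d y * pd c (g d b) y * PP c b y"
      using Psym[OF y, of d f] gsymf[of b d] by simp
  qed
  have r2: "A2 = Q4" unfolding A2_def Q4_def by (simp add: mult.commute)
  have r3: "B1 = Q3"
  proof -
    have "B1 = (\<Sum>e\<in>UNIV. \<Sum>c\<in>UNIV. \<Sum>a\<in>UNIV. PP c a y * pd e (g a c) y * PP e f y)"
      unfolding B1_def by (simp add: sum_distrib_right)
    also have "\<dots> = (\<Sum>c\<in>UNIV. \<Sum>e\<in>UNIV. \<Sum>a\<in>UNIV. PP c a y * pd e (g a c) y * PP e f y)"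
      by (rule sum.swap)
    also have "\<dots> = (\<Sum>c\<in>UNIV. \<Sum>a\<in>UNIV. \<Sum>e\<in>UNIV. PP c a y * pd e (g a c) y * PP e f y)"
      by (rule sum.cong[OF refl]) (rule sum.swap)
    also have "\<dots> = Q3"
      unfolding Q3_def
    proof (intro sum.cong refl)
      fix c a e show "PP c a y * pd e (g a c) y * PP e f y = PP f e y * pd e (g c a) y * PP c a y"
        using Psym[OF y, of e f] gsymf[of a c] by simp
    qed
    finally show ?thesis .
  qed
  have r4: "2 * B3 = A3 - B2"
  proof -
    have "2 * B3 = (\<Sum>e\<in>UNIV. (2 * ss e y) * PP e f y)"
      unfolding B3_def by (simp add: sum_distrib_left mult.assoc)
    also have "\<dots> = (\<Sum>e\<in>UNIV. ((\<Sum>d\<in>UNIV. pd d (l e) y * vn d y) - (\<Sum>d\<in>UNIV. pd e (l d) y * vn d y)) * PP e f y)"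
      by (simp only: s2)
    also have "\<dots> = (\<Sum>e\<in>UNIV. \<Sum>d\<in>UNIV. pd d (l e) y * vn d y * PP e f y) - (\<Sum>e\<in>UNIV. \<Sum>d\<in>UNIV. pd e (l d) y * vn d y * PP e f y)"
      by (simp add: left_diff_distrib sum_subtractf sum_distrib_right)
    also have "(\<Sum>e\<in>UNIV. \<Sum>d\<in>UNIV. pd d (l e) y * vn d y * PP e f y) = A3"
      unfolding A3_def by (subst sum.swap) (simp add: sum_distrib_left mult.commute mult.left_commute)
    also have "(\<Sum>e\<in>UNIV. \<Sum>d\<in>UNIV. pd e (l d) y * vn d y * PP e f y) = B2"
      unfolding B2_def by (simp add: sum_distrib_left sum_distrib_right mult.commute mult.left_commute)
    finally show ?thesis .
  qed
  have r5: "B3 = (\<Sum>e\<in>UNIV. PP f e y * ss e y)"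
    unfolding B3_def using Psym[OF y] by (simp add: mult.commute)
  have "2 * ((\<Sum>c\<in>UNIV. pd c (PP c f) y) + (\<Sum>e\<in>UNIV. (\<Sum>c\<in>UNIV. Gam c c e y) * PP e f y)
   + (\<Sum>c\<in>UNIV. \<Sum>d\<in>UNIV. Gam f c d y * PP c d y))
   = 2 * (\<Sum>c\<in>UNIV. pd c (PP c f) y) + 2 * (\<Sum>e\<in>UNIV. (\<Sum>c\<in>UNIV. Gam c c e y) * PP e f y)
   + 2 * (\<Sum>c\<in>UNIV. \<Sum>d\<in>UNIV. Gam f c d y * PP c d y)" by simp
  also have "\<dots> = 2 * (- B3 - vn f y * A4)"
    using h1 h2 h3 r1 r2 r3 r4 by (simp add: algebra_simps)
  finally show ?thesis using r5 unfolding A4_def by simp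
qed

end

context ND begin

definition "NN c b y = pd b (vn c) y + (\<Sum>d\<in>UNIV. Gam c b d y * vn d y)"

lemma NN_fun: "NN c b = (\<lambda>y. pd b (vn c) y + (\<Sum>d\<in>UNIV. Gam c b d y * vn d y))"
  by (simp add: fun_eq_iff NN_def)

lemma sm_NN[simp]: "smooth_on S (NN c b)" unfolding NN_fun by simp

lemma sch: "x \<in> S \<Longrightarrow> smooth_on S f \<Longrightarrow> pd j (pd i f) x = pd i (pd j f) x"
  by (rule schwarz[OF S_open]) simp_all

lemma RicN: "x \<in> S \<Longrightarrow> (\<Sum>a\<in>UNIV. Ric Gam a b x * vn a x) =
    (\<Sum>c\<in>UNIV. pd c (NN c b) x + (\<Sum>e\<in>UNIV. Gam c c e x * NN e b x) - (\<Sum>e\<in>UNIV. Gam e c b x * NN c e x))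
    - pd b (\<lambda>y. \<Sum>c\<in>UNIV. NN c c y) x"
proof -
  assume x: "x \<in> S"
  define T1 where "T1 = (\<Sum>c\<in>UNIV. \<Sum>a\<in>UNIV. pd c (Gam c b a) x * vn a x)"
  define T2 where "T2 = (\<Sum>c\<in>UNIV. \<Sum>a\<in>UNIV. pd b (Gam c c a) x * vn a x)"
  define T3 where "T3 = (\<Sum>c\<in>UNIV. \<Sum>a\<in>UNIV. \<Sum>e\<in>UNIV. Gam c c e x * Gam e b a x * vn a x)"
  define T4 where "T4 = (\<Sum>c\<in>UNIV. \<Sum>a\<in>UNIV. \<Sum>e\<in>UNIV. Gam c b e x * Gam e c a x * vn a x)"
  define W1 where "W1 = (\<Sum>c\<in>UNIV. \<Sum>d\<in>UNIV. Gam c b d x * pd c (vn d) x)"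
  define W2 where "W2 = (\<Sum>c\<in>UNIV. \<Sum>d\<in>UNIV. Gam c c d x * pd b (vn d) x)"
  define Sc where "Sc = (\<Sum>c\<in>UNIV. pd c (pd b (vn c)) x)"
  have L: "(\<Sum>a\<in>UNIV. Ric Gam a b x * vn a x) = T1 - T2 + T3 - T4"
  proof -
    have "(\<Sum>a\<in>UNIV. Ric Gam a b x * vn a x) = (\<Sum>a\<in>UNIV. \<Sum>c\<in>UNIV. Riem Gam c a c b x * vn a x)"
      unfolding Ric_def by (simp add: sum_distrib_right)
    also have "\<dots> = (\<Sum>c\<in>UNIV. \<Sum>a\<in>UNIV. Riem Gam c a c b x * vn a x)" by (rule sum.swap)
    also have "\<dots> = T1 - T2 + T3 - T4"
      unfolding T1_def T2_def T3_def T4_def Riem_def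
      by (simp add: sum.distrib sum_subtractf algebra_simps sum_distrib_right sum_distrib_left)
    finally show ?thesis .
  qed
  have R1: "(\<Sum>c\<in>UNIV. pd c (NN c b) x) = Sc + T1 + W1"
    unfolding Sc_def T1_def W1_def NN_fun using x
    by (simp add: pds sum.distrib algebra_simps)
  have R2: "(\<Sum>c\<in>UNIV. \<Sum>e\<in>UNIV. Gam c c e x * NN e b x) = W2 + T3"
  proof -
    have "(\<Sum>c\<in>UNIV. \<Sum>e\<in>UNIV. Gam c c e x * NN e b x)
       = (\<Sum>c\<in>UNIV. \<Sum>e\<in>UNIV. Gam c c e x * pd b (vn e) x) + (\<Sum>c\<in>UNIV. \<Sum>e\<in>UNIV. \<Sum>d\<in>UNIV. Gam c c e x * Gam e b d x * vn d x)"
      unfolding NN_def by (simp add: sum.distrib ring_distribs sum_distrib_left mult.assoc)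
    also have "(\<Sum>c\<in>UNIV. \<Sum>e\<in>UNIV. \<Sum>d\<in>UNIV. Gam c c e x * Gam e b d x * vn d x) = T3"
      unfolding T3_def by (rule sum.cong[OF refl]) (rule sum.swap)
    finally show ?thesis unfolding W2_def by simp
  qed
  have R3: "(\<Sum>c\<in>UNIV. \<Sum>e\<in>UNIV. Gam e c b x * NN c e x) = W1 + T4"
  proof -
    have "(\<Sum>c\<in>UNIV. \<Sum>e\<in>UNIV. Gam e c b x * NN c e x)
       = (\<Sum>c\<in>UNIV. \<Sum>e\<in>UNIV. Gam e c b x * pd e (vn c) x) + (\<Sum>c\<in>UNIV. \<Sum>e\<in>UNIV. \<Sum>d\<in>UNIV. Gam e c b x * Gam c e d x * vn d x)"
      unfolding NN_def by (simp add: sum.distrib ring_distribs sum_distrib_left mult.assoc)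
    also have "(\<Sum>c\<in>UNIV. \<Sum>e\<in>UNIV. Gam e c b x * pd e (vn c) x) = W1"
    proof -
      have "(\<Sum>c\<in>UNIV. \<Sum>e\<in>UNIV. Gam e c b x * pd e (vn c) x) = (\<Sum>e\<in>UNIV. \<Sum>c\<in>UNIV. Gam e c b x * pd e (vn c) x)"
        by (rule sum.swap)
      also have "\<dots> = W1" unfolding W1_def using Gsym[OF x] by simp
      finally show ?thesis .
    qed
    also have "(\<Sum>c\<in>UNIV. \<Sum>e\<in>UNIV. \<Sum>d\<in>UNIV. Gam e c b x * Gam c e d x * vn d x) = T4"
    proof -
      have "(\<Sum>c\<in>UNIV. \<Sum>e\<in>UNIV. \<Sum>d\<in>UNIV. Gam e c b x * Gam c e d x * vn d x)
          = (\<Sum>e\<in>UNIV. \<Sum>c\<in>UNIV. \<Sum>d\<in>UNIV. Gam e c b x * Gam c e d x * vn d x)" by (rule sum.swap)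
      also have "\<dots> = (\<Sum>e\<in>UNIV. \<Sum>c\<in>UNIV. \<Sum>d\<in>UNIV. Gam e b c x * Gam c e d x * vn d x)"
        using Gsym[OF x] by simp
      also have "\<dots> = (\<Sum>e\<in>UNIV. \<Sum>d\<in>UNIV. \<Sum>c\<in>UNIV. Gam e b c x * Gam c e d x * vn d x)"
        by (rule sum.cong[OF refl]) (rule sum.swap)
      also have "\<dots> = T4" unfolding T4_def by simp
      finally show ?thesis .
    qed
    finally show ?thesis by simp
  qed
  have R4: "pd b (\<lambda>y. \<Sum>c\<in>UNIV. NN c c y) x = Sc + T2 + W2"
  proof -
    have "pd b (\<lambda>y. \<Sum>c\<in>UNIV. NN c c y) x = (\<Sum>c\<in>UNIV. pd b (NN c c) x)"
      using x by (simp add: pds)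
    also have "\<dots> = (\<Sum>c\<in>UNIV. pd b (pd c (vn c)) x) + T2 + W2"
      unfolding T2_def W2_def NN_fun using x by (simp add: pds sum.distrib algebra_simps)
    also have "(\<Sum>c\<in>UNIV. pd b (pd c (vn c)) x) = Sc"
      unfolding Sc_def using sch[OF x] by simp
    finally show ?thesis .
  qed
  have "(\<Sum>c\<in>UNIV. pd c (NN c b) x + (\<Sum>e\<in>UNIV. Gam c c e x * NN e b x) - (\<Sum>e\<in>UNIV. Gam e c b x * NN c e x))
     = (\<Sum>c\<in>UNIV. pd c (NN c b) x) + (\<Sum>c\<in>UNIV. \<Sum>e\<in>UNIV. Gam c c e x * NN e b x) - (\<Sum>c\<in>UNIV. \<Sum>e\<in>UNIV. Gam e c b x * NN c e x)"
    by (simp add: sum.distrib sum_subtractf)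
  then show ?thesis using L R1 R2 R3 R4 by linarith
qed

end

lemma swap23: "(\<Sum>a\<in>A. \<Sum>b\<in>B. \<Sum>c\<in>C. f a b c) = (\<Sum>a\<in>A. \<Sum>c\<in>C. \<Sum>b\<in>B. f a b c)"
  by (rule sum.cong[OF refl]) (rule sum.swap)

context ND begin

lemma NN_eq: "y \<in> S \<Longrightarrow> NN c b y = ss b y * vn c y + (\<Sum>f\<in>UNIV. PP c f y * UU b f y)"
  unfolding NN_def by (rule Na)

lemma claim1: "x \<in> S \<Longrightarrow> (\<Sum>a\<in>UNIV. Ric Gam a b x * vn a x)
            = lie_n_s g l l2 b x
              - 2 * (\<Sum>a\<in>UNIV. \<Sum>f\<in>UNIV. PP a f x * UU a b x * ss f x)
              + (\<Sum>c\<in>UNIV. \<Sum>f\<in>UNIV. PP c f x * nablaU g l l2 Gam c b f x)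
              - pd b trU x + trU x * ss b x"
proof -
  assume x: "x \<in> S"
  define E1 where "E1 = (\<Sum>c\<in>UNIV. vn c x * pd c (ss b) x)"
  define E2 where "E2 = (\<Sum>c\<in>UNIV. pd c (vn c) x)"
  define E3 where "E3 = (\<Sum>c\<in>UNIV. \<Sum>f\<in>UNIV. pd c (PP c f) x * UU b f x)"
  define E4 where "E4 = (\<Sum>c\<in>UNIV. \<Sum>f\<in>UNIV. PP c f x * pd c (UU b f) x)"
  define E5 where "E5 = (\<Sum>c\<in>UNIV. \<Sum>e\<in>UNIV. Gam c c e x * vn e x)"
  define E6 where "E6 = (\<Sum>c\<in>UNIV. \<Sum>e\<in>UNIV. \<Sum>f\<in>UNIV. Gam c c e x * PP e f x * UU b f x)"
  define E7 where "E7 = (\<Sum>c\<in>UNIV. \<Sum>e\<in>UNIV. Gam e c b x * ss e x * vn c x)"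
  define E8 where "E8 = (\<Sum>c\<in>UNIV. \<Sum>e\<in>UNIV. \<Sum>f\<in>UNIV. Gam e c b x * PP c f x * UU e f x)"
  define Lie2 where "Lie2 = (\<Sum>c\<in>UNIV. ss c x * pd b (vn c) x)"
  define Z1 where "Z1 = (\<Sum>a\<in>UNIV. \<Sum>f\<in>UNIV. PP a f x * UU a b x * ss f x)"
  define Z2 where "Z2 = (\<Sum>c\<in>UNIV. \<Sum>f\<in>UNIV. \<Sum>d\<in>UNIV. PP c f x * Gam d c b x * UU d f x)"
  define Z3 where "Z3 = (\<Sum>c\<in>UNIV. \<Sum>f\<in>UNIV. \<Sum>d\<in>UNIV. PP c f x * Gam d c f x * UU b d x)"
  define K where "K = (\<Sum>f\<in>UNIV. \<Sum>e\<in>UNIV. PP f e x * ss e x * UU b f x)"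
  have F1: "(\<Sum>c\<in>UNIV. pd c (NN c b) x) = E1 + ss b x * E2 + E3 + E4"
  proof -
    have "pd c (NN c b) x = pd c (\<lambda>y. ss b y * vn c y + (\<Sum>f\<in>UNIV. PP c f y * UU b f y)) x" for c
      by (rule pd_local[OF S_open x]) (simp add: NN_eq)
    then have "(\<Sum>c\<in>UNIV. pd c (NN c b) x) = (\<Sum>c\<in>UNIV. pd c (\<lambda>y. ss b y * vn c y + (\<Sum>f\<in>UNIV. PP c f y * UU b f y)) x)"
      by simp
    also have "\<dots> = E1 + ss b x * E2 + E3 + E4"
      unfolding E1_def E2_def E3_def E4_def using x
      by (simp add: pds sum.distrib sum_distrib_left algebra_simps)
    finally show ?thesis .
  qed
  have F2: "(\<Sum>c\<in>UNIV. \<Sum>e\<in>UNIV. Gam c c e x * NN e b x) = ss b x * E5 + E6"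
    unfolding E5_def E6_def NN_eq[OF x]
    by (simp add: sum.distrib sum_distrib_left ring_distribs algebra_simps)
  have F3: "(\<Sum>c\<in>UNIV. \<Sum>e\<in>UNIV. Gam e c b x * NN c e x) = E7 + E8"
    unfolding E7_def E8_def NN_eq[OF x]
    by (simp add: sum.distrib sum_distrib_left ring_distribs algebra_simps)
  have F4: "pd b (\<lambda>y. \<Sum>c\<in>UNIV. NN c c y) x = pd b trU x"
  proof (rule pd_local[OF S_open x])
    show "\<forall>y\<in>S. (\<Sum>c\<in>UNIV. NN c c y) = trU y"
    proof
      fix y assume y: "y \<in> S"
      have "(\<Sum>c\<in>UNIV. NN c c y) = (\<Sum>c\<in>UNIV. vn c y * ss c y) + (\<Sum>c\<in>UNIV. \<Sum>f\<in>UNIV. PP c f y * UU c f y)"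
        by (simp add: NN_eq[OF y] sum.distrib mult.commute)
      then show "(\<Sum>c\<in>UNIV. NN c c y) = trU y" by (simp add: sn trPU_def)
    qed
  qed
  have Ra: "E2 + E5 = trU x"
  proof -
    have "(\<Sum>c\<in>UNIV. NN c c x) = E2 + E5" unfolding E2_def E5_def NN_def by (simp add: sum.distrib)
    moreover have "(\<Sum>c\<in>UNIV. NN c c x) = (\<Sum>c\<in>UNIV. vn c x * ss c x) + (\<Sum>c\<in>UNIV. \<Sum>f\<in>UNIV. PP c f x * UU c f x)"
      by (simp add: NN_eq[OF x] sum.distrib mult.commute)
    ultimately show ?thesis by (simp add: sn trPU_def)
  qed
  have Rb: "E8 = Z2"
  proof -
    have "E8 = (\<Sum>c\<in>UNIV. \<Sum>f\<in>UNIV. \<Sum>e\<in>UNIV. Gam e c b x * PP c f x * UU e f x)"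
      unfolding E8_def by (rule swap23)
    then show ?thesis unfolding Z2_def by (simp add: mult.commute mult.left_commute)
  qed
  have Rc: "E3 + E6 + Z3 = - K"
  proof -
    have "(\<Sum>f\<in>UNIV. ((\<Sum>c\<in>UNIV. pd c (PP c f) x) + (\<Sum>e\<in>UNIV. (\<Sum>c\<in>UNIV. Gam c c e x) * PP e f x)
       + (\<Sum>c\<in>UNIV. \<Sum>d\<in>UNIV. Gam f c d x * PP c d x)) * UU b f x)
       = (\<Sum>f\<in>UNIV. (- (\<Sum>e\<in>UNIV. PP f e x * ss e x) - vn f x * (\<Sum>c\<in>UNIV. vn c x * pd c l2 x)) * UU b f x)"
      using divP[OF x] by simp
    also have "\<dots> = - K - (\<Sum>c\<in>UNIV. vn c x * pd c l2 x) * (\<Sum>f\<in>UNIV. UU b f x * vn f x)"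
      unfolding K_def by (simp add: algebra_simps sum.distrib sum_subtractf sum_negf sum_distrib_left sum_distrib_right)
    also have "(\<Sum>f\<in>UNIV. UU b f x * vn f x) = 0" by (rule Un[OF x])
    finally have d: "(\<Sum>f\<in>UNIV. ((\<Sum>c\<in>UNIV. pd c (PP c f) x) + (\<Sum>e\<in>UNIV. (\<Sum>c\<in>UNIV. Gam c c e x) * PP e f x)
       + (\<Sum>c\<in>UNIV. \<Sum>d\<in>UNIV. Gam f c d x * PP c d x)) * UU b f x) = - K" by simp
    have c1: "(\<Sum>f\<in>UNIV. (\<Sum>c\<in>UNIV. pd c (PP c f) x) * UU b f x) = E3"
      unfolding E3_def by (subst sum.swap) (simp add: sum_distrib_right)
    have c2: "(\<Sum>f\<in>UNIV. (\<Sum>e\<in>UNIV. (\<Sum>c\<in>UNIV. Gam c c e x) * PP e f x) * UU b f x) = E6"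
    proof -
      have "E6 = (\<Sum>e\<in>UNIV. \<Sum>c\<in>UNIV. \<Sum>f\<in>UNIV. Gam c c e x * PP e f x * UU b f x)"
        unfolding E6_def by (rule sum.swap)
      also have "\<dots> = (\<Sum>e\<in>UNIV. \<Sum>f\<in>UNIV. \<Sum>c\<in>UNIV. Gam c c e x * PP e f x * UU b f x)"
        by (rule swap23)
      also have "\<dots> = (\<Sum>f\<in>UNIV. \<Sum>e\<in>UNIV. \<Sum>c\<in>UNIV. Gam c c e x * PP e f x * UU b f x)"
        by (rule sum.swap)
      finally show ?thesis by (simp add: sum_distrib_right)
    qed
    have c3: "(\<Sum>f\<in>UNIV. (\<Sum>c\<in>UNIV. \<Sum>d\<in>UNIV. Gam f c d x * PP c d x) * UU b f x) = Z3"
    proof -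
      have "Z3 = (\<Sum>c\<in>UNIV. \<Sum>d\<in>UNIV. \<Sum>f\<in>UNIV. PP c f x * Gam d c f x * UU b d x)"
        unfolding Z3_def by (rule swap23)
      also have "\<dots> = (\<Sum>d\<in>UNIV. \<Sum>c\<in>UNIV. \<Sum>f\<in>UNIV. PP c f x * Gam d c f x * UU b d x)"
        by (rule sum.swap)
      finally show ?thesis by (simp add: sum_distrib_right sum_distrib_left mult.commute mult.left_commute)
    qed
    have "(\<Sum>f\<in>UNIV. ((\<Sum>c\<in>UNIV. pd c (PP c f) x) + (\<Sum>e\<in>UNIV. (\<Sum>c\<in>UNIV. Gam c c e x) * PP e f x)
       + (\<Sum>c\<in>UNIV. \<Sum>d\<in>UNIV. Gam f c d x * PP c d x)) * UU b f x)
      = (\<Sum>f\<in>UNIV. (\<Sum>c\<in>UNIV. pd c (PP c f) x) * UU b f x) + (\<Sum>f\<in>UNIV. (\<Sum>e\<in>UNIV. (\<Sum>c\<in>UNIV. Gam c c e x) * PP e f x) * UU b f x)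
       + (\<Sum>f\<in>UNIV. (\<Sum>c\<in>UNIV. \<Sum>d\<in>UNIV. Gam f c d x * PP c d x) * UU b f x)"
      by (simp only: distrib_right sum.distrib)
    then show ?thesis using d c1 c2 c3 by linarith
  qed
  have Rd: "E7 + Lie2 = K"
  proof -
    have "(\<Sum>e\<in>UNIV. ss e x * NN e b x) = Lie2 + E7"
    proof -
      have "(\<Sum>e\<in>UNIV. ss e x * NN e b x) = Lie2 + (\<Sum>e\<in>UNIV. \<Sum>c\<in>UNIV. ss e x * Gam e b c x * vn c x)"
        unfolding NN_def Lie2_def by (simp add: ring_distribs sum.distrib sum_distrib_left mult.assoc)
      also have "(\<Sum>e\<in>UNIV. \<Sum>c\<in>UNIV. ss e x * Gam e b c x * vn c x) = E7"
        unfolding E7_def by (subst sum.swap) (simp add: Gsym[OF x, of _ b] mult.commute mult.left_commute)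
      finally show ?thesis .
    qed
    moreover have "(\<Sum>e\<in>UNIV. ss e x * NN e b x) = K"
    proof -
      have "(\<Sum>e\<in>UNIV. ss e x * NN e b x) = ss b x * (\<Sum>e\<in>UNIV. vn e x * ss e x) + (\<Sum>e\<in>UNIV. \<Sum>f\<in>UNIV. ss e x * PP e f x * UU b f x)"
        by (simp add: NN_eq[OF x] ring_distribs sum.distrib sum_distrib_left mult.commute mult.left_commute)
      also have "(\<Sum>e\<in>UNIV. vn e x * ss e x) = 0" by (rule sn)
      also have "(\<Sum>e\<in>UNIV. \<Sum>f\<in>UNIV. ss e x * PP e f x * UU b f x) = K"
        unfolding K_def by (subst sum.swap) (simp add: Psym[OF x] mult.commute mult.left_commute)
      finally show ?thesis by simp
    qed
    ultimately show ?thesis by simp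
  qed
  have Re: "Z1 = K"
    unfolding Z1_def K_def by (simp add: Usym[of _ b] mult.commute mult.left_commute)
  have T1: "lie_n_s g l l2 b x = E1 + Lie2"
    unfolding lie_n_s_def E1_def Lie2_def by (simp add: sum.distrib)
  have T2: "(\<Sum>c\<in>UNIV. \<Sum>f\<in>UNIV. PP c f x * nablaU g l l2 Gam c b f x) = E4 - Z2 - Z3"
    unfolding nablaU_def E4_def Z2_def Z3_def
    by (simp add: ring_distribs sum.distrib sum_subtractf sum_distrib_left mult.assoc)
  have RN: "(\<Sum>a\<in>UNIV. Ric Gam a b x * vn a x) =
     (\<Sum>c\<in>UNIV. pd c (NN c b) x) + (\<Sum>c\<in>UNIV. \<Sum>e\<in>UNIV. Gam c c e x * NN e b x)
     - (\<Sum>c\<in>UNIV. \<Sum>e\<in>UNIV. Gam e c b x * NN c e x) - pd b (\<lambda>y. \<Sum>c\<in>UNIV. NN c c y) x"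
    using RicN[OF x, of b] by (simp add: sum.distrib sum_subtractf)
  have P1: "ss b x * E2 + ss b x * E5 = trU x * ss b x" using Ra by (metis distrib_left mult.commute)
  show ?thesis
    unfolding RN F1 F2 F3 F4 T1 T2 Z1_def[symmetric]
    using P1 Rb Rc Rd Re by linarith
qed

end

lemma sum4_rev: "(\<Sum>i\<in>A. \<Sum>j\<in>B. \<Sum>k\<in>C. \<Sum>m\<in>D. f i j k m) = (\<Sum>m\<in>D. \<Sum>k\<in>C. \<Sum>j\<in>B. \<Sum>i\<in>A. f i j k m)"
proof -
  have "(\<Sum>i\<in>A. \<Sum>j\<in>B. \<Sum>k\<in>C. \<Sum>m\<in>D. f i j k m) = (\<Sum>i\<in>A. \<Sum>j\<in>B. \<Sum>m\<in>D. \<Sum>k\<in>C. f i j k m)"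
    by (intro sum.cong refl) (rule sum.swap)
  also have "\<dots> = (\<Sum>i\<in>A. \<Sum>m\<in>D. \<Sum>j\<in>B. \<Sum>k\<in>C. f i j k m)"
    by (rule sum.cong[OF refl]) (rule sum.swap)
  also have "\<dots> = (\<Sum>m\<in>D. \<Sum>i\<in>A. \<Sum>j\<in>B. \<Sum>k\<in>C. f i j k m)"
    by (rule sum.swap)
  also have "\<dots> = (\<Sum>m\<in>D. \<Sum>i\<in>A. \<Sum>k\<in>C. \<Sum>j\<in>B. f i j k m)"
    by (intro sum.cong refl) (rule sum.swap)
  also have "\<dots> = (\<Sum>m\<in>D. \<Sum>k\<in>C. \<Sum>i\<in>A. \<Sum>j\<in>B. f i j k m)"
    by (rule sum.cong[OF refl]) (rule sum.swap)
  also have "\<dots> = (\<Sum>m\<in>D. \<Sum>k\<in>C. \<Sum>j\<in>B. \<Sum>i\<in>A. f i j k m)"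
    by (intro sum.cong refl) (rule sum.swap)
  finally show ?thesis .
qed

context ND begin

declare Ai_sm[simp] AA_sm[simp]

definition "TT e y = (\<Sum>i\<in>UNIV. \<Sum>j\<in>UNIV. Ai y $ i $ j * pd e (\<lambda>z. AA z $ j $ i) y)"

lemma TT_fun: "TT e = (\<lambda>y. \<Sum>i\<in>UNIV. \<Sum>j\<in>UNIV. Ai y $ i $ j * pd e (\<lambda>z. AA z $ j $ i) y)"
  by (simp add: fun_eq_iff TT_def)

lemma sm_TT[simp]: "smooth_on S (TT e)" unfolding TT_fun by simp

lemma TT_eq: "y \<in> S \<Longrightarrow> TT e y = (\<Sum>c\<in>UNIV. \<Sum>a\<in>UNIV. PP c a y * pd e (g a c) y) + 2 * (\<Sum>c\<in>UNIV. vn c y * pd e (l c) y)"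
  unfolding TT_def
  by (simp add: sum_option Ai_ent Ai_ent2 n2z AA_fun sum.distrib)

lemma TT_sym: "x \<in> S \<Longrightarrow> pd a (TT b) x = pd b (TT a) x"
proof -
  assume x: "x \<in> S"
  define H where "H a b = (\<Sum>i\<in>UNIV. \<Sum>j\<in>UNIV. \<Sum>k\<in>UNIV. \<Sum>m\<in>UNIV.
      Ai x $ i $ k * pd a (\<lambda>z. AA z $ k $ m) x * Ai x $ m $ j * pd b (\<lambda>z. AA z $ j $ i) x)" for a b
  define J where "J a b = (\<Sum>i\<in>UNIV. \<Sum>j\<in>UNIV. Ai x $ i $ j * pd a (pd b (\<lambda>z. AA z $ j $ i)) x)" for a b
  have e: "pd a (TT b) x = - H a b + J a b" for a b
  proof -
    have "pd a (TT b) x = (\<Sum>i\<in>UNIV. \<Sum>j\<in>UNIV. pd a (\<lambda>z. Ai z $ i $ j) x * pd b (\<lambda>z. AA z $ j $ i) x)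
        + J a b"
      unfolding TT_fun J_def using x by (simp add: pds sum.distrib)
    also have "(\<Sum>i\<in>UNIV. \<Sum>j\<in>UNIV. pd a (\<lambda>z. Ai z $ i $ j) x * pd b (\<lambda>z. AA z $ j $ i) x) = - H a b"
      unfolding H_def dAi[OF x] by (simp add: sum_distrib_right sum_negf)
    finally show ?thesis by simp
  qed
  have hs: "H a b = H b a"
  proof -
    have "H b a = (\<Sum>m\<in>UNIV. \<Sum>k\<in>UNIV. \<Sum>j\<in>UNIV. \<Sum>i\<in>UNIV.
      Ai x $ i $ k * pd b (\<lambda>z. AA z $ k $ m) x * Ai x $ m $ j * pd a (\<lambda>z. AA z $ j $ i) x)"
      unfolding H_def by (rule sum4_rev)
    also have "\<dots> = H a b" unfolding H_def by (simp add: mult.commute mult.left_commute)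
    finally show ?thesis by simp
  qed
  have js: "J a b = J b a"
    unfolding J_def using sch[OF x AA_sm] by simp
  show ?thesis using e hs js by simp
qed

lemma trG2: "y \<in> S \<Longrightarrow> (\<Sum>c\<in>UNIV. Gam c c e y) = TT e y / 2 + ss e y"
  using trG[of y e] TT_eq[of y e] by linarith

lemma RicAnti: "x \<in> S \<Longrightarrow> Ric Gam a b x - Ric Gam b a x
    = pd a (\<lambda>y. \<Sum>c\<in>UNIV. Gam c c b y) x - pd b (\<lambda>y. \<Sum>c\<in>UNIV. Gam c c a y) x"
proof -
  assume x: "x \<in> S"
  have p1: "pd c (Gam c b a) x = pd c (Gam c a b) x" for c
    by (rule pd_local[OF S_open x]) (simp add: Gsym)
  have q1: "(\<Sum>c\<in>UNIV. \<Sum>e\<in>UNIV. Gam c c e x * Gam e b a x) = (\<Sum>c\<in>UNIV. \<Sum>e\<in>UNIV. Gam c c e x * Gam e a b x)"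
    using Gsym[OF x] by simp
  have q2: "(\<Sum>c\<in>UNIV. \<Sum>e\<in>UNIV. Gam c b e x * Gam e c a x) = (\<Sum>c\<in>UNIV. \<Sum>e\<in>UNIV. Gam c a e x * Gam e c b x)"
  proof -
    have "(\<Sum>c\<in>UNIV. \<Sum>e\<in>UNIV. Gam c b e x * Gam e c a x) = (\<Sum>e\<in>UNIV. \<Sum>c\<in>UNIV. Gam c b e x * Gam e c a x)"
      by (rule sum.swap)
    also have "\<dots> = (\<Sum>c\<in>UNIV. \<Sum>e\<in>UNIV. Gam c a e x * Gam e c b x)"
      using Gsym[OF x] by (simp add: mult.commute)
    finally show ?thesis .
  qed
  have "Ric Gam a b x = (\<Sum>c\<in>UNIV. pd c (Gam c b a) x) - (\<Sum>c\<in>UNIV. pd b (Gam c c a) x)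
     + (\<Sum>c\<in>UNIV. \<Sum>e\<in>UNIV. Gam c c e x * Gam e b a x) - (\<Sum>c\<in>UNIV. \<Sum>e\<in>UNIV. Gam c b e x * Gam e c a x)"
    unfolding Ric_def Riem_def by (simp add: sum.distrib sum_subtractf)
  moreover have "Ric Gam b a x = (\<Sum>c\<in>UNIV. pd c (Gam c a b) x) - (\<Sum>c\<in>UNIV. pd a (Gam c c b) x)
     + (\<Sum>c\<in>UNIV. \<Sum>e\<in>UNIV. Gam c c e x * Gam e a b x) - (\<Sum>c\<in>UNIV. \<Sum>e\<in>UNIV. Gam c a e x * Gam e c b x)"
    unfolding Ric_def Riem_def by (simp add: sum.distrib sum_subtractf)
  moreover have "pd a (\<lambda>y. \<Sum>c\<in>UNIV. Gam c c b y) x = (\<Sum>c\<in>UNIV. pd a (Gam c c b) x)"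
    using x by (simp add: pds)
  moreover have "pd b (\<lambda>y. \<Sum>c\<in>UNIV. Gam c c a y) x = (\<Sum>c\<in>UNIV. pd b (Gam c c a) x)"
    using x by (simp add: pds)
  ultimately show ?thesis using p1 q1 q2 by simp
qed

lemma RicAnti2: "x \<in> S \<Longrightarrow> Ric Gam a b x - Ric Gam b a x = pd a (ss b) x - pd b (ss a) x"
proof -
  assume x: "x \<in> S"
  have "pd a (\<lambda>y. \<Sum>c\<in>UNIV. Gam c c b y) x = pd a (\<lambda>y. TT b y / 2 + ss b y) x" for a b
    by (rule pd_local[OF S_open x]) (simp add: trG2)
  then have "pd a (\<lambda>y. \<Sum>c\<in>UNIV. Gam c c b y) x = pd a (TT b) x / 2 + pd a (ss b) x" for a b
    using x by (simp add: pds)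
  then show ?thesis using RicAnti[OF x, of a b] TT_sym[OF x, of a b] by simp
qed

lemma claim2aux: "x \<in> S \<Longrightarrow> (\<Sum>a\<in>UNIV. (Ric Gam a b x - Ric Gam b a x) * vn a x) = lie_n_s g l l2 b x"
proof -
  assume x: "x \<in> S"
  have "(\<Sum>a\<in>UNIV. (Ric Gam a b x - Ric Gam b a x) * vn a x)
      = (\<Sum>a\<in>UNIV. vn a x * pd a (ss b) x) - (\<Sum>a\<in>UNIV. vn a x * pd b (ss a) x)"
    using RicAnti2[OF x] by (simp add: left_diff_distrib right_diff_distrib sum_subtractf mult.commute)
  also have "(\<Sum>a\<in>UNIV. vn a x * pd b (ss a) x) = - (\<Sum>a\<in>UNIV. pd b (vn a) x * ss a x)"
    using Dsn[OF x, of b] by simp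
  finally show ?thesis unfolding lie_n_s_def by (simp add: sum.distrib mult.commute)
qed

lemma claim2: "x \<in> S \<Longrightarrow> (\<Sum>a\<in>UNIV. (Ric Gam a b x + Ric Gam b a x) / 2 * vn a x)
            = lie_n_s g l l2 b x / 2
              - 2 * (\<Sum>a\<in>UNIV. \<Sum>f\<in>UNIV. PP a f x * UU a b x * ss f x)
              + (\<Sum>c\<in>UNIV. \<Sum>f\<in>UNIV. PP c f x * nablaU g l l2 Gam c b f x)
              - pd b trU x + trU x * ss b x"
proof -
  assume x: "x \<in> S"
  have "(\<Sum>a\<in>UNIV. (Ric Gam a b x + Ric Gam b a x) / 2 * vn a x)
     = (\<Sum>a\<in>UNIV. Ric Gam a b x * vn a x) - (\<Sum>a\<in>UNIV. (Ric Gam a b x - Ric Gam b a x) * vn a x) / 2"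
  proof -
    have pw: "\<And>a. a \<in> UNIV \<Longrightarrow> (Ric Gam a b x + Ric Gam b a x) / 2 * vn a x = Ric Gam a b x * vn a x - (Ric Gam a b x - Ric Gam b a x) * vn a x / 2"
      by (simp add: field_simps)
    have "(\<Sum>a\<in>UNIV. (Ric Gam a b x + Ric Gam b a x) / 2 * vn a x) = (\<Sum>a\<in>UNIV. Ric Gam a b x * vn a x - (Ric Gam a b x - Ric Gam b a x) * vn a x / 2)"
      by (rule sum.cong[OF refl pw])
    also have "\<dots> = (\<Sum>a\<in>UNIV. Ric Gam a b x * vn a x) - (\<Sum>a\<in>UNIV. (Ric Gam a b x - Ric Gam b a x) * vn a x) / 2"
      by (simp only: sum_subtractf sum_divide_distrib)
    finally show ?thesis .
  qed
  then show ?thesis using claim1[OF x, of b] claim2aux[OF x, of b] by simp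
qed

end

context ND begin

lemma UUf_sym: "UU a b = UU b a" by (simp add: fun_eq_iff Usym)

lemma Un': "y \<in> S \<Longrightarrow> (\<Sum>b\<in>UNIV. UU b a y * vn b y) = 0"
proof -
  assume y: "y \<in> S"
  have "\<And>b. UU b a y = UU a b y" by (rule Usym)
  then show ?thesis using Un[OF y, of a] by simp
qed

lemma nUn: "x \<in> S \<Longrightarrow> (\<Sum>b\<in>UNIV. vn b x * nablaU g l l2 Gam c b f x) = - (\<Sum>d\<in>UNIV. \<Sum>e\<in>UNIV. UU d f x * PP d e x * UU c e x)"
proof -
  assume x: "x \<in> S"
  have a1: "(\<Sum>b\<in>UNIV. vn b x * pd c (UU b f) x) = - (\<Sum>b\<in>UNIV. UU f b x * pd c (vn b) x)"
    using DUn[OF x, of c f] by (simp add: UUf_sym[of _ f] mult.commute)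
  have a2: "(\<Sum>b\<in>UNIV. vn b x * (\<Sum>d\<in>UNIV. Gam d c b x * UU d f x)) = (\<Sum>d\<in>UNIV. UU d f x * (\<Sum>b\<in>UNIV. Gam d c b x * vn b x))"
  proof -
    have "(\<Sum>b\<in>UNIV. vn b x * (\<Sum>d\<in>UNIV. Gam d c b x * UU d f x)) = (\<Sum>b\<in>UNIV. \<Sum>d\<in>UNIV. vn b x * (Gam d c b x * UU d f x))"
      by (simp add: sum_distrib_left)
    also have "\<dots> = (\<Sum>d\<in>UNIV. \<Sum>b\<in>UNIV. vn b x * (Gam d c b x * UU d f x))" by (rule sum.swap)
    finally show ?thesis by (simp add: sum_distrib_left mult.commute mult.left_commute)
  qed
  have a3: "(\<Sum>b\<in>UNIV. vn b x * (\<Sum>d\<in>UNIV. Gam d c f x * UU b d x)) = 0"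
  proof -
    have "(\<Sum>b\<in>UNIV. vn b x * (\<Sum>d\<in>UNIV. Gam d c f x * UU b d x)) = (\<Sum>b\<in>UNIV. \<Sum>d\<in>UNIV. vn b x * (Gam d c f x * UU b d x))"
      by (simp add: sum_distrib_left)
    also have "\<dots> = (\<Sum>d\<in>UNIV. \<Sum>b\<in>UNIV. vn b x * (Gam d c f x * UU b d x))" by (rule sum.swap)
    also have "\<dots> = (\<Sum>d\<in>UNIV. Gam d c f x * (\<Sum>b\<in>UNIV. UU b d x * vn b x))"
      by (simp add: sum_distrib_left mult.commute mult.left_commute)
    also have "\<dots> = 0" using Un'[OF x] by simp
    finally show ?thesis .
  qed
  have "(\<Sum>b\<in>UNIV. vn b x * nablaU g l l2 Gam c b f x)
     = (\<Sum>b\<in>UNIV. vn b x * pd c (UU b f) x) - (\<Sum>b\<in>UNIV. vn b x * (\<Sum>d\<in>UNIV. Gam d c b x * UU d f x))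
       - (\<Sum>b\<in>UNIV. vn b x * (\<Sum>d\<in>UNIV. Gam d c f x * UU b d x))"
    unfolding nablaU_def by (simp add: ring_distribs sum.distrib sum_subtractf)
  also have "\<dots> = - (\<Sum>d\<in>UNIV. UU d f x * NN d c x)"
    unfolding a1 a2 a3 NN_def by (simp add: ring_distribs sum.distrib Usym[of f] sum_negf[symmetric])
  also have "\<dots> = - (\<Sum>d\<in>UNIV. \<Sum>e\<in>UNIV. UU d f x * PP d e x * UU c e x)"
  proof -
    have "(\<Sum>d\<in>UNIV. UU d f x * NN d c x) = ss c x * (\<Sum>d\<in>UNIV. UU f d x * vn d x) + (\<Sum>d\<in>UNIV. \<Sum>e\<in>UNIV. UU d f x * PP d e x * UU c e x)"
      by (simp add: NN_eq[OF x] ring_distribs sum.distrib sum_distrib_left Usym[of f] mult.commute mult.left_commute)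
    then show ?thesis using Un[OF x, of f] by simp
  qed
  finally show ?thesis .
qed

lemma claim3: "x \<in> S \<Longrightarrow> (\<Sum>a\<in>UNIV. \<Sum>b\<in>UNIV. Ric Gam a b x * vn a x * vn b x)
            = - (\<Sum>a\<in>UNIV. \<Sum>b\<in>UNIV. \<Sum>c\<in>UNIV. \<Sum>d\<in>UNIV.
                   PP a b x * PP c d x * UU a c x * UU b d x)
              - (\<Sum>a\<in>UNIV. vn a x * pd a trU x)"
proof -
  assume x: "x \<in> S"
  define R where "R b = lie_n_s g l l2 b x
              - 2 * (\<Sum>a\<in>UNIV. \<Sum>f\<in>UNIV. PP a f x * UU a b x * ss f x)
              + (\<Sum>c\<in>UNIV. \<Sum>f\<in>UNIV. PP c f x * nablaU g l l2 Gam c b f x)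
              - pd b trU x + trU x * ss b x" for b
  have "(\<Sum>a\<in>UNIV. \<Sum>b\<in>UNIV. Ric Gam a b x * vn a x * vn b x) = (\<Sum>b\<in>UNIV. vn b x * (\<Sum>a\<in>UNIV. Ric Gam a b x * vn a x))"
    by (subst sum.swap) (simp add: sum_distrib_left mult.commute mult.left_commute)
  also have "\<dots> = (\<Sum>b\<in>UNIV. vn b x * R b)" unfolding R_def using claim1[OF x] by simp
  also have "\<dots> = (\<Sum>b\<in>UNIV. vn b x * lie_n_s g l l2 b x)
      - 2 * (\<Sum>b\<in>UNIV. vn b x * (\<Sum>a\<in>UNIV. \<Sum>f\<in>UNIV. PP a f x * UU a b x * ss f x))
      + (\<Sum>b\<in>UNIV. vn b x * (\<Sum>c\<in>UNIV. \<Sum>f\<in>UNIV. PP c f x * nablaU g l l2 Gam c b f x))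
      - (\<Sum>b\<in>UNIV. vn b x * pd b trU x) + trU x * (\<Sum>b\<in>UNIV. vn b x * ss b x)"
    unfolding R_def by (simp add: ring_distribs sum.distrib sum_subtractf sum_distrib_left mult.commute mult.left_commute)
  also have "(\<Sum>b\<in>UNIV. vn b x * lie_n_s g l l2 b x) = 0"
  proof -
    have "(\<Sum>b\<in>UNIV. vn b x * lie_n_s g l l2 b x) =
        (\<Sum>b\<in>UNIV. \<Sum>c\<in>UNIV. vn b x * vn c x * pd c (ss b) x) + (\<Sum>b\<in>UNIV. \<Sum>c\<in>UNIV. vn b x * ss c x * pd b (vn c) x)"
      unfolding lie_n_s_def by (simp add: ring_distribs sum.distrib sum_distrib_left mult.assoc)
    also have "(\<Sum>b\<in>UNIV. \<Sum>c\<in>UNIV. vn b x * vn c x * pd c (ss b) x) = (\<Sum>c\<in>UNIV. vn c x * (\<Sum>b\<in>UNIV. vn b x * pd c (ss b) x))"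
      by (subst sum.swap) (simp add: sum_distrib_left mult.commute mult.left_commute)
    also have "(\<Sum>b\<in>UNIV. \<Sum>c\<in>UNIV. vn b x * ss c x * pd b (vn c) x) = (\<Sum>c\<in>UNIV. vn c x * (\<Sum>b\<in>UNIV. pd c (vn b) x * ss b x))"
      by (simp add: sum_distrib_left mult.commute mult.left_commute)
    finally show ?thesis using Dsn[OF x] by (simp add: sum.distrib[symmetric] ring_distribs[symmetric])
  qed
  also have "(\<Sum>b\<in>UNIV. vn b x * (\<Sum>a\<in>UNIV. \<Sum>f\<in>UNIV. PP a f x * UU a b x * ss f x)) = 0"
  proof -
    have "(\<Sum>b\<in>UNIV. vn b x * (\<Sum>a\<in>UNIV. \<Sum>f\<in>UNIV. PP a f x * UU a b x * ss f x))
       = (\<Sum>b\<in>UNIV. \<Sum>a\<in>UNIV. \<Sum>f\<in>UNIV. vn b x * (PP a f x * UU a b x * ss f x))"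
      by (simp add: sum_distrib_left)
    also have "\<dots> = (\<Sum>a\<in>UNIV. \<Sum>b\<in>UNIV. \<Sum>f\<in>UNIV. vn b x * (PP a f x * UU a b x * ss f x))" by (rule sum.swap)
    also have "\<dots> = (\<Sum>a\<in>UNIV. \<Sum>f\<in>UNIV. \<Sum>b\<in>UNIV. vn b x * (PP a f x * UU a b x * ss f x))" by (rule swap23)
    also have "\<dots> = (\<Sum>a\<in>UNIV. \<Sum>f\<in>UNIV. PP a f x * ss f x * (\<Sum>b\<in>UNIV. UU a b x * vn b x))"
      by (simp add: sum_distrib_left mult.commute mult.left_commute)
    also have "\<dots> = 0" using Un[OF x] by simp
    finally show ?thesis .
  qed
  also have "(\<Sum>b\<in>UNIV. vn b x * ss b x) = 0" by (rule sn)
  also have "(\<Sum>b\<in>UNIV. vn b x * (\<Sum>c\<in>UNIV. \<Sum>f\<in>UNIV. PP c f x * nablaU g l l2 Gam c b f x))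
     = - (\<Sum>a\<in>UNIV. \<Sum>b\<in>UNIV. \<Sum>c\<in>UNIV. \<Sum>d\<in>UNIV. PP a b x * PP c d x * UU a c x * UU b d x)"
  proof -
    have "(\<Sum>b\<in>UNIV. vn b x * (\<Sum>c\<in>UNIV. \<Sum>f\<in>UNIV. PP c f x * nablaU g l l2 Gam c b f x))
       = (\<Sum>b\<in>UNIV. \<Sum>c\<in>UNIV. \<Sum>f\<in>UNIV. vn b x * (PP c f x * nablaU g l l2 Gam c b f x))"
      by (simp add: sum_distrib_left)
    also have "\<dots> = (\<Sum>c\<in>UNIV. \<Sum>b\<in>UNIV. \<Sum>f\<in>UNIV. vn b x * (PP c f x * nablaU g l l2 Gam c b f x))" by (rule sum.swap)
    also have "\<dots> = (\<Sum>c\<in>UNIV. \<Sum>f\<in>UNIV. \<Sum>b\<in>UNIV. vn b x * (PP c f x * nablaU g l l2 Gam c b f x))" by (rule swap23)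
    also have "\<dots> = (\<Sum>c\<in>UNIV. \<Sum>f\<in>UNIV. PP c f x * (\<Sum>b\<in>UNIV. vn b x * nablaU g l l2 Gam c b f x))"
      by (simp add: sum_distrib_left mult.commute mult.left_commute)
    also have "\<dots> = - (\<Sum>c\<in>UNIV. \<Sum>f\<in>UNIV. \<Sum>d\<in>UNIV. \<Sum>e\<in>UNIV. PP c f x * (UU d f x * PP d e x * UU c e x))"
      using nUn[OF x] by (simp add: sum_distrib_left sum_negf)
    also have "(\<Sum>c\<in>UNIV. \<Sum>f\<in>UNIV. \<Sum>d\<in>UNIV. \<Sum>e\<in>UNIV. PP c f x * (UU d f x * PP d e x * UU c e x))
       = (\<Sum>c\<in>UNIV. \<Sum>f\<in>UNIV. \<Sum>e\<in>UNIV. \<Sum>d\<in>UNIV. PP c f x * (UU d f x * PP d e x * UU c e x))"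
      by (rule sum.cong[OF refl], rule sum.cong[OF refl], rule sum.swap)
    also have "\<dots> = (\<Sum>a\<in>UNIV. \<Sum>b\<in>UNIV. \<Sum>c\<in>UNIV. \<Sum>d\<in>UNIV. PP a b x * PP c d x * UU a c x * UU b d x)"
    proof (intro sum.cong refl)
      fix c f e d
      show "PP c f x * (UU d f x * PP d e x * UU c e x) = PP c f x * PP e d x * UU c e x * UU f d x"
        using Psym[OF x, of d e] Usym[of d f x] by simp
    qed
    finally show ?thesis .
  qed
  finally show ?thesis by simp
qed

end

theorem lemma3p10:
  fixes S :: "(real^'n::finite) set"
    and g :: "'n \<Rightarrow> 'n \<Rightarrow> real^'n \<Rightarrow> real"
    and l :: "'n \<Rightarrow> real^'n \<Rightarrow> real"
    and l2 :: "real^'n \<Rightarrow> real"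
    and Gam :: "'n \<Rightarrow> 'n \<Rightarrow> 'n \<Rightarrow> real^'n \<Rightarrow> real"
    and x :: "real^'n"
  assumes "null_data S g l l2"
    and "ring_connection S g l l2 Gam"
    and "x \<in> S"
  shows "(\<forall>b. (\<Sum>a\<in>UNIV. Ric Gam a b x * nv g l l2 a x)
            = lie_n_s g l l2 b x
              - 2 * (\<Sum>a\<in>UNIV. \<Sum>f\<in>UNIV. Pm g l l2 a f x * Uf g l l2 a b x * sv g l l2 f x)
              + (\<Sum>c\<in>UNIV. \<Sum>f\<in>UNIV. Pm g l l2 c f x * nablaU g l l2 Gam c b f x)
              - pd b (trPU g l l2) x + trPU g l l2 x * sv g l l2 b x)
    \<and> (\<forall>b. (\<Sum>a\<in>UNIV. (Ric Gam a b x + Ric Gam b a x) / 2 * nv g l l2 a x)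
            = lie_n_s g l l2 b x / 2
              - 2 * (\<Sum>a\<in>UNIV. \<Sum>f\<in>UNIV. Pm g l l2 a f x * Uf g l l2 a b x * sv g l l2 f x)
              + (\<Sum>c\<in>UNIV. \<Sum>f\<in>UNIV. Pm g l l2 c f x * nablaU g l l2 Gam c b f x)
              - pd b (trPU g l l2) x + trPU g l l2 x * sv g l l2 b x)
    \<and> ((\<Sum>a\<in>UNIV. \<Sum>b\<in>UNIV. Ric Gam a b x * nv g l l2 a x * nv g l l2 b x)
            = - (\<Sum>a\<in>UNIV. \<Sum>b\<in>UNIV. \<Sum>c\<in>UNIV. \<Sum>d\<in>UNIV.
                   Pm g l l2 a b x * Pm g l l2 c d x * Uf g l l2 a c x * Uf g l l2 b d x)
              - (\<Sum>a\<in>UNIV. nv g l l2 a x * pd a (trPU g l l2) x))"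
proof -
  interpret ND S g l l2 Gam using assms(1,2) by unfold_locales
  show ?thesis using claim1[OF assms(3)] claim2[OF assms(3)] claim3[OF assms(3)] by blast
qed

end
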